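(* Let $F:\mathbb{R}^d\to\mathbb{R}^d$ be a locally bounded measurable function, $(\xi_n)_{n\in\mathbb{Z}_+}$ i.i.d. non-degenerate Gaussian random vectors in $\mathbb{R}^d$, and $(X_n)$ the perturbed dynamical system $X_{n+1}=F(X_n)+\xi_n$. Let $E\subset\mathbb{R}^d$ be measurable with positive Lebesgue measure and $G:E\to(0,+\infty)$ measurable, and define for $x\in E$ the Feynman–Kac semigroup $$P_nf(x)=\mathbb{E}_x\Big(\prod_{k=1}^nG(X_k)\mathbf 1_{X_k\in E}\,f(X_n)\Big).$$ Assume that $1/G$ is locally bounded, that $G(x)\le C\exp(|x|)$ for all $x\in E$ and some constant $C>0$, and that there exists $p>1$ such that $|x|-p|F(x)|\to+\infty$ as $|x|\to+\infty$. Then $(P_n)_{n\in\mathbb{N}}$ (on the state space $E$) satisfies Condition (G).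
   Context: $\mathbb{E}_x$ denotes expectation for the chain started at $X_0=x$. Condition (G) for a semigroup $(P_n)_{n\in\mathbb{Z}_+}$ of positive operators on state space $E$: there exist positive real constants $\theta_1,\theta_2,c_1,c_2,c_3$, an integer $n_1\ge1$, functions $\psi_1:E\to(0,+\infty)$, $\psi_2:E\to\mathbb{R}_+$, a measurable subset $K\subset E$ and a probability measure $\nu$ on $K$ such that (G1) for all $x\in K$ and all measurable $A\subset K$, $P_{n_1}(\psi_1\mathbf 1_A)(x)\ge c_1\nu(A)\psi_1(x)$; (G2) $\theta_1<\theta_2$, $\inf_{x\in K}\psi_2(x)/\psi_1(x)>0$, $\sup_{x\in E}\psi_2(x)/\psi_1(x)\le1$, $P_1\psi_1(x)\le\theta_1\psi_1(x)+c_2\mathbf 1_K(x)\psi_1(x)$ for all $x\in E$, and $P_1\psi_2(x)\ge\theta_2\psi_2(x)$ for all $x\in E$; (G3) $\sup_{n\in\mathbb{Z}_+}\dfrac{\sup_{y\in K}P_n\psi_1(y)/\psi_1(y)}{\inf_{y\in K}P_n\psi_1(y)/\psi_1(y)}\le c_3$; (G4) for all $x\in K$ there exists $n_4(x)$ such that for all $n\ge n_4(x)$, $P_n(\mathbf 1_K\psi_1)(x)>0$. *)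

theory Defs
  imports "HOL-Analysis.Analysis" "HOL-Probability.Probability"
begin

definition gaussian_density :: "real^'d \<Rightarrow> real^'d^'d \<Rightarrow> real^'d \<Rightarrow> real" where
  "gaussian_density m S x =
     exp (- ((x - m) \<bullet> (matrix_inv S *v (x - m))) / 2) / sqrt ((2 * pi) ^ CARD('d) * det S)"

definition nondegenerate_covariance :: "real^'d^'d \<Rightarrow> bool" where
  "nondegenerate_covariance S \<longleftrightarrow> transpose S = S \<and> (\<forall>v. v \<noteq> 0 \<longrightarrow> v \<bullet> (S *v v) > 0)"

definition locally_bounded_on :: "'a::metric_space set \<Rightarrow> ('a \<Rightarrow> 'b::real_normed_vector) \<Rightarrow> bool" where
  "locally_bounded_on S f \<longleftrightarrow> (\<forall>x. \<exists>e>0. bounded (f ` (ball x e \<inter> S)))"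

text \<open>Feynman--Kac semigroup of the chain X_{n+1} = F(X_n) + xi_n, xi_n iid N(m,S):
  P_0 f = f,  P_{n+1} f(x) = E_x[ G(X_1) 1_E(X_1) P_n f(X_1) ]  (Markov property),
  where X_1 has density y \<mapsto> gaussian_density m S (y - F x) under P_x.\<close>
fun fk_semigroup :: "(real^'d \<Rightarrow> real^'d) \<Rightarrow> real^'d \<Rightarrow> real^'d^'d \<Rightarrow> (real^'d) set
    \<Rightarrow> (real^'d \<Rightarrow> real) \<Rightarrow> nat \<Rightarrow> (real^'d \<Rightarrow> ennreal) \<Rightarrow> real^'d \<Rightarrow> ennreal" where
  "fk_semigroup F m S E G 0 f x = f x"
| "fk_semigroup F m S E G (Suc n) f x =
     (\<integral>\<^sup>+ y. ennreal (gaussian_density m S (y - F x)) * ennreal (G y) * indicator E y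
              * fk_semigroup F m S E G n f y \<partial>lborel)"

definition condition_G :: "'a measure \<Rightarrow> (nat \<Rightarrow> ('a \<Rightarrow> ennreal) \<Rightarrow> 'a \<Rightarrow> ennreal) \<Rightarrow> bool" where
  "condition_G M P \<longleftrightarrow>
    (\<exists>\<theta>1 \<theta>2 c1 c2 c3 :: real. \<exists>n1 :: nat. \<exists>\<psi>1 \<psi>2 :: 'a \<Rightarrow> real. \<exists>K. \<exists>\<nu> :: 'a measure.
       \<theta>1 > 0 \<and> \<theta>2 > 0 \<and> c1 > 0 \<and> c2 > 0 \<and> c3 > 0 \<and> n1 \<ge> 1 \<and>
       \<psi>1 \<in> borel_measurable M \<and> \<psi>2 \<in> borel_measurable M \<and>
       (\<forall>x\<in>space M. \<psi>1 x > 0) \<and> (\<forall>x\<in>space M. \<psi>2 x \<ge> 0) \<and>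
       K \<in> sets M \<and> prob_space \<nu> \<and> sets \<nu> = sets (restrict_space M K) \<and>
       \<comment> \<open>(G1)\<close>
       (\<forall>x\<in>K. \<forall>A\<in>sets M. A \<subseteq> K \<longrightarrow>
          P n1 (\<lambda>y. ennreal (\<psi>1 y) * indicator A y) x \<ge> ennreal c1 * emeasure \<nu> A * ennreal (\<psi>1 x)) \<and>
       \<comment> \<open>(G2)\<close>
       \<theta>1 < \<theta>2 \<and> (INF x\<in>K. \<psi>2 x / \<psi>1 x) > 0 \<and> (\<forall>x\<in>space M. \<psi>2 x / \<psi>1 x \<le> 1) \<and>
       (\<forall>x\<in>space M. P 1 (\<lambda>y. ennreal (\<psi>1 y)) x
           \<le> ennreal (\<theta>1 * \<psi>1 x + c2 * indicator K x * \<psi>1 x)) \<and>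
       (\<forall>x\<in>space M. P 1 (\<lambda>y. ennreal (\<psi>2 y)) x \<ge> ennreal (\<theta>2 * \<psi>2 x)) \<and>
       \<comment> \<open>(G3)\<close>
       (\<forall>n. (SUP y\<in>K. P n (\<lambda>z. ennreal (\<psi>1 z)) y / ennreal (\<psi>1 y))
             / (INF y\<in>K. P n (\<lambda>z. ennreal (\<psi>1 z)) y / ennreal (\<psi>1 y)) \<le> ennreal c3) \<and>
       \<comment> \<open>(G4)\<close>
       (\<forall>x\<in>K. \<exists>n4. \<forall>n\<ge>n4. P n (\<lambda>y. indicator K y * ennreal (\<psi>1 y)) x > 0))"

end

theory Submission
  imports Defs
begin


lemma pd_invertible:
  fixes S :: "real^'d^'d"
  assumes pd: "\<And>v. v \<noteq> 0 \<Longrightarrow> v \<bullet> (S *v v) > 0"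
  shows "invertible S"
proof -
  have "inj ((*v) S)"
    unfolding vec.inj_iff_eq_0
  proof (intro allI impI)
    fix x assume h: "S *v x = 0"
    show "x = 0"
    proof (rule ccontr)
      assume "x \<noteq> 0"
      then have "x \<bullet> (S *v x) > 0" using pd by blast
      then show False using h by simp
    qed
  qed
  then show ?thesis using matrix_left_invertible_injective invertible_left_inverse by blast
qed

lemma ndc_invertible:
  fixes S :: "real^'d^'d"
  assumes "nondegenerate_covariance S"
  shows "invertible S"
  using assms pd_invertible unfolding nondegenerate_covariance_def by blast

lemma S_Sinv:
  fixes S :: "real^'d^'d"
  assumes "invertible S"
  shows "S *v (matrix_inv S *v v) = v"
proof -
  have "S ** matrix_inv S = mat 1"
    using assms unfolding invertible_def matrix_inv_def by (rule someI2_ex) auto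
  then show ?thesis by (simp add: matrix_vector_mul_assoc)
qed

lemma Q_pos:
  fixes S :: "real^'d^'d"
  assumes "nondegenerate_covariance S" "v \<noteq> 0"
  shows "v \<bullet> (matrix_inv S *v v) > 0"
proof -
  define w where "w = matrix_inv S *v v"
  have v: "v = S *v w" unfolding w_def using S_Sinv[OF ndc_invertible[OF assms(1)]] by simp
  have "w \<noteq> 0" using assms(2) v by auto
  then have "w \<bullet> (S *v w) > 0" using assms(1) unfolding nondegenerate_covariance_def by blast
  then show ?thesis unfolding w_def[symmetric] using v by (simp add: inner_commute)
qed

lemma Q_cont: "continuous_on A (\<lambda>u::real^'d. u \<bullet> (M *v u))"
  by (intro continuous_intros linear_continuous_on matrix_vector_mul_linear)

lemma Q_scale: "(c *\<^sub>R u) \<bullet> (M *v (c *\<^sub>R u)) = c * c * (u \<bullet> (M *v (u::real^'d)))"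
  by (simp add: matrix_vector_mult_scaleR)

lemma Q_bounds:
  fixes M :: "real^'d^'d"
  assumes pos: "\<And>v. v \<noteq> 0 \<Longrightarrow> v \<bullet> (M *v v) > 0"
  shows "\<exists>a b. a > 0 \<and> b > 0 \<and> (\<forall>u. a * norm u ^ 2 \<le> u \<bullet> (M *v u) \<and> u \<bullet> (M *v u) \<le> b * norm u ^ 2)"
proof -
  have cs: "compact (sphere (0::real^'d) 1)" by simp
  have ne: "sphere (0::real^'d) 1 \<noteq> {}" by simp
  obtain x0 where x0: "x0 \<in> sphere 0 1" "\<forall>y\<in>sphere 0 1. x0 \<bullet> (M *v x0) \<le> y \<bullet> (M *v y)"
    using continuous_attains_inf[OF cs ne Q_cont] by blast
  obtain x1 where x1: "x1 \<in> sphere 0 1" "\<forall>y\<in>sphere 0 1. y \<bullet> (M *v y) \<le> x1 \<bullet> (M *v x1)"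
    using continuous_attains_sup[OF cs ne Q_cont] by blast
  define a where "a = x0 \<bullet> (M *v x0)"
  define b where "b = x1 \<bullet> (M *v x1)"
  have "x0 \<noteq> 0" "x1 \<noteq> 0" using x0(1) x1(1) by auto
  then have a: "a > 0" and b: "b > 0" unfolding a_def b_def using pos by auto
  have "a * norm u ^ 2 \<le> u \<bullet> (M *v u) \<and> u \<bullet> (M *v u) \<le> b * norm u ^ 2" for u
  proof (cases "u = 0")
    case True then show ?thesis by simp
  next
    case False
    define e where "e = (1 / norm u) *\<^sub>R u"
    have e: "e \<in> sphere 0 1" unfolding e_def using False by simp
    have u: "u = norm u *\<^sub>R e" unfolding e_def using False by simp
    have q: "u \<bullet> (M *v u) = norm u ^ 2 * (e \<bullet> (M *v e))"
      by (subst (1 2) u, subst Q_scale) (simp add: power2_eq_square)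
    have "a \<le> e \<bullet> (M *v e)" "e \<bullet> (M *v e) \<le> b" using x0(2) x1(2) e a_def b_def by auto
    then show ?thesis unfolding q
      by (auto intro!: mult_right_mono simp: mult.commute)
  qed
  then show ?thesis using a b by blast
qed

lemma det_pos:
  fixes S :: "real^'d^'d"
  assumes "nondegenerate_covariance S"
  shows "det S > 0"
proof -
  define A where "A t = (1 - t) *\<^sub>R (mat 1 :: real^'d^'d) + t *\<^sub>R S" for t :: real
  have nz: "det (A t) \<noteq> 0" if t: "0 \<le> t" "t \<le> 1" for t
  proof -
    have "\<forall>v. v \<noteq> 0 \<longrightarrow> v \<bullet> (A t *v v) > 0"
    proof (intro allI impI)
      fix v :: "real^'d" assume "v \<noteq> 0"
      have sv: "v \<bullet> (S *v v) > 0" using assms \<open>v \<noteq> 0\<close> unfolding nondegenerate_covariance_def by blast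
      have eq: "v \<bullet> (A t *v v) = (1 - t) * (v \<bullet> v) + t * (v \<bullet> (S *v v))"
        unfolding A_def by (simp add: matrix_vector_mult_add_rdistrib matrix_vector_mult_scaleR
            matrix_scaleR_vector_ac[symmetric] inner_add_right)
      have "v \<bullet> v > 0" using \<open>v \<noteq> 0\<close> by simp
      show "v \<bullet> (A t *v v) > 0"
      proof (cases "t = 0")
        case True then show ?thesis using \<open>v \<bullet> v > 0\<close> eq by simp
      next
        case False
        then have "t * (v \<bullet> (S *v v)) > 0" using t sv by simp
        moreover have "(1 - t) * (v \<bullet> v) \<ge> 0" using t \<open>v \<bullet> v > 0\<close> by simp
        ultimately show ?thesis using eq by linarith
      qed
    qed
    then show ?thesis using pd_invertible invertible_det_nz by blast
  qed
  have cont: "continuous_on {0..1} (\<lambda>t. det (A t))"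
    unfolding det_def A_def
    by (intro continuous_intros) 
  show ?thesis
  proof (rule ccontr)
    assume "\<not> det S > 0"
    then have "det (A 1) \<le> 0" unfolding A_def by simp
    moreover have "det (A 0) \<ge> 0" unfolding A_def by simp
    ultimately obtain t where "0 \<le> t" "t \<le> 1" "det (A t) = 0"
      using IVT2'[of "\<lambda>t. det (A t)" 1 0 0] cont by auto
    then show False using nz by blast
  qed
qed



lemma ball_measure_le:
  fixes r :: real assumes "r \<ge> 0"
  shows "emeasure lborel (ball (0::real^'d) r) \<le> ennreal ((2 * r) ^ CARD('d))"
proof -
  define l :: "real^'d" where "l = (\<chi> i. - r)"
  define u :: "real^'d" where "u = (\<chi> i. r)"
  have sub: "ball (0::real^'d) r \<subseteq> cbox l u"
  proof
    fix x :: "real^'d" assume "x \<in> ball 0 r"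
    then have "norm x < r" by simp
    then have "\<bar>x $ i\<bar> \<le> r" for i using component_le_norm_cart[of x i] by linarith
    then have "- r \<le> x $ i \<and> x $ i \<le> r" for i by (simp add: abs_le_iff) (metis abs_le_iff minus_le_iff)
    then show "x \<in> cbox l u" unfolding l_def u_def mem_box_cart by auto
  qed
  have "emeasure lborel (cbox l u) = ennreal (prod ((\<bullet>) (u - l)) Basis)"
    by (rule emeasure_lborel_cbox) (auto simp: l_def u_def Basis_vec_def inner_axis assms)
  also have "prod ((\<bullet>) (u - l)) Basis = (2 * r) ^ CARD('d)"
  proof -
    have "prod ((\<bullet>) (u - l)) Basis = prod (\<lambda>b. 2 * r) (Basis :: (real^'d) set)"
      by (rule prod.cong) (auto simp: l_def u_def Basis_vec_def inner_axis)
    also have "\<dots> = (2 * r) ^ card (Basis :: (real^'d) set)" by simp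
    also have "card (Basis :: (real^'d) set) = CARD('d)" by simp
    finally show ?thesis .
  qed
  finally have eq: "emeasure lborel (cbox l u) = ennreal ((2 * r) ^ CARD('d))" .
  have "emeasure lborel (ball (0::real^'d) r) \<le> emeasure lborel (cbox l u)" by (intro emeasure_mono sub) simp
  then show ?thesis using eq by simp
qed

lemma ennreal_le_suminf: "(f::nat\<Rightarrow>ennreal) k \<le> suminf f"
  using sum_le_suminf[of f "{k}"] by simp

lemma poly_decay_integral:
  "(\<integral>\<^sup>+ v. ennreal (1 / (1 + norm (v::real^'d)) ^ (CARD('d) + 2)) \<partial>lborel) < \<top>"
proof -
  define N where "N = CARD('d)"
  define c where "c k = 2 ^ N * inverse ((1 + real k) ^ 2)" for k :: nat
  have summ: "summable c"
    unfolding c_def using Polygamma_converges'[of "1::real" 2]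
    by (intro summable_mult) simp
  have pt: "ennreal (1 / (1 + norm v) ^ (N + 2)) \<le>
      (\<Sum>k. ennreal (1 / (1 + real k) ^ (N + 2)) * indicator (ball (0::real^'d) (real k + 1)) v)" for v :: "real^'d"
  proof -
    define k where "k = nat (floor (norm v))"
    have kk: "real k = real_of_int \<lfloor>norm v\<rfloor>" unfolding k_def by simp
    have k1: "real k \<le> norm v" "norm v < real k + 1" unfolding kk using floor_correct[of "norm v"] by linarith+
    have "ennreal (1 / (1 + norm v) ^ (N + 2)) \<le> ennreal (1 / (1 + real k) ^ (N + 2))"
      using k1 by (intro ennreal_leI divide_left_mono power_mono) auto
    also have "\<dots> = ennreal (1 / (1 + real k) ^ (N + 2)) * indicator (ball (0::real^'d) (real k + 1)) v"
      using k1 by simp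
    also have "\<dots> \<le> (\<Sum>k. ennreal (1 / (1 + real k) ^ (N + 2)) * indicator (ball (0::real^'d) (real k + 1)) v)"
      by (rule ennreal_le_suminf[of "\<lambda>k. ennreal (1 / (1 + real k) ^ (N + 2)) * indicator (ball (0::real^'d) (real k + 1)) v"])
    finally show ?thesis .
  qed
  have "(\<integral>\<^sup>+ v. ennreal (1 / (1 + norm (v::real^'d)) ^ (N + 2)) \<partial>lborel) \<le>
      (\<integral>\<^sup>+ v. (\<Sum>k. ennreal (1 / (1 + real k) ^ (N + 2)) * indicator (ball (0::real^'d) (real k + 1)) v) \<partial>lborel)"
    by (intro nn_integral_mono pt)
  also have "\<dots> = (\<Sum>k. \<integral>\<^sup>+ v. ennreal (1 / (1 + real k) ^ (N + 2)) * indicator (ball (0::real^'d) (real k + 1)) v \<partial>lborel)"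
  proof (rule nn_integral_suminf)
    fix k
    have [measurable]: "ball (0::real^'d) (real k + 1) \<in> sets borel" by simp
    show "(\<lambda>v. ennreal (1 / (1 + real k) ^ (N + 2)) * indicator (ball (0::real^'d) (real k + 1)) v) \<in> borel_measurable lborel"
      by measurable
  qed
  also have "\<dots> = (\<Sum>k. ennreal (1 / (1 + real k) ^ (N + 2)) * emeasure lborel (ball (0::real^'d) (real k + 1)))"
    by (simp add: nn_integral_cmult_indicator)
  also have "\<dots> \<le> (\<Sum>k. ennreal (c k))"
  proof (intro suminf_le allI)
    fix k
    have "ennreal (1 / (1 + real k) ^ (N + 2)) * emeasure lborel (ball (0::real^'d) (real k + 1))
        \<le> ennreal (1 / (1 + real k) ^ (N + 2)) * ennreal ((2 * (real k + 1)) ^ N)"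
      unfolding N_def by (intro mult_left_mono ball_measure_le) auto
    also have "\<dots> = ennreal (c k)"
    proof -
      define x where "x = 1 + real k"
      have x: "x > 0" unfolding x_def by simp
      have e1: "(2 * (real k + 1)) ^ N = 2^N * x^N" unfolding x_def by (subst power_mult_distrib[symmetric]) (simp add: add.commute)
      have e2: "(1 + real k)^(N+2) = x^N * x^2" unfolding x_def by (rule power_add)
      have e3: "c k = 2^N * inverse (x^2)" unfolding c_def x_def ..
      have "1 / (x^N * x^2) * (2^N * x^N) = 2 ^ N * inverse (x ^ 2)" using x by (simp add: field_simps)
      then have "1 / (1 + real k) ^ (N + 2) * (2 * (real k + 1)) ^ N = c k"
        unfolding e1 e2 e3 .
      then show ?thesis by (simp add: ennreal_mult'[symmetric])
    qed
    finally show "ennreal (1 / (1 + real k) ^ (N + 2)) * emeasure lborel (ball (0::real^'d) (real k + 1)) \<le> ennreal (c k)" .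
  qed auto
  also have "\<dots> < \<top>"
  proof -
    have "(\<Sum>k. ennreal (c k)) \<noteq> \<top>" by (rule ennreal_suminf_neq_top[OF summ]) (simp add: c_def)
    then show ?thesis unfolding less_top .
  qed
  finally show ?thesis unfolding N_def .
qed



lemma quad_bound: "a > 0 \<Longrightarrow> - a * r^2 + c * r \<le> c^2 / (4 * a)" for a r c :: real
proof -
  assume a: "a > 0"
  have "0 \<le> a * (r - c / (2 * a))^2" using a by simp
  also have "a * (r - c / (2 * a))^2 = a * r^2 - c * r + c^2 / (4 * a)"
    using a by (simp add: power2_eq_square field_simps)
  finally show ?thesis by linarith
qed

lemma exp_poly_bound:
  fixes a \<gamma> :: real and N :: nat
  assumes a: "a > 0"
  shows "\<exists>B>0. \<forall>r\<ge>0. exp (- a * r^2 + \<gamma> * r) \<le> B / (1 + r) ^ N"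
proof -
  define M where "M = real (Suc N)"
  define B where "B = M ^ Suc N * exp ((\<gamma> + 1)^2 / (4 * a))"
  have B: "B > 0" unfolding B_def M_def by simp
  have "exp (- a * r^2 + \<gamma> * r) \<le> B / (1 + r) ^ N" if r: "r \<ge> 0" for r
  proof -
    have "(1 + r) ^ Suc N \<le> (M * (1 + r / M)) ^ Suc N"
      unfolding M_def using r by (intro power_mono) (auto simp: field_simps)
    also have "\<dots> = M ^ Suc N * (1 + r / M) ^ Suc N" by (simp add: power_mult_distrib)
    also have "(1 + r / M) ^ Suc N \<le> exp r"
      unfolding M_def using r exp_ge_one_plus_x_over_n_power_n[of "Suc N" r] by simp
    finally have p: "(1 + r) ^ Suc N \<le> M ^ Suc N * exp r" unfolding M_def by (simp add: mult_left_mono)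
    have "(1 + r) ^ N \<le> (1 + r) ^ Suc N" using r by (intro power_increasing) auto
    with p have p2: "(1 + r) ^ N \<le> M ^ Suc N * exp r" by linarith
    have "(1 + r) ^ N * exp (- a * r^2 + \<gamma> * r) \<le> M ^ Suc N * exp r * exp (- a * r^2 + \<gamma> * r)"
      using p2 by (intro mult_right_mono) auto
    also have "\<dots> = M ^ Suc N * exp (- a * r^2 + (\<gamma> + 1) * r)"
      by (simp add: exp_add[symmetric] algebra_simps)
    also have "\<dots> \<le> B"
      unfolding B_def using quad_bound[OF a, of r "\<gamma> + 1"] unfolding M_def
      by (intro mult_left_mono) auto
    finally have "(1 + r) ^ N * exp (- a * r^2 + \<gamma> * r) \<le> B" .
    moreover have "(1 + r) ^ N > 0" using r by simp
    ultimately show ?thesis by (simp add: field_simps)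
  qed
  then show ?thesis using B by blast
qed

lemma gauss_rad_tail:
  fixes a \<gamma> \<delta> :: real
  assumes a: "a > 0" and d: "\<delta> > 0"
  shows "\<exists>L\<ge>0. (\<integral>\<^sup>+ v. indicator {v. L < norm v} v * ennreal (exp (- a * norm (v::real^'d)^2 + \<gamma> * norm v)) \<partial>lborel) < ennreal \<delta>"
proof -
  define N where "N = CARD('d)"
  obtain B where B: "B > 0" "\<forall>r\<ge>0. exp (- a * r^2 + \<gamma> * r) \<le> B / (1 + r) ^ (N + 3)"
    using exp_poly_bound[OF a] by blast
  define I where "I = (\<integral>\<^sup>+ v. ennreal (1 / (1 + norm (v::real^'d)) ^ (N + 2)) \<partial>lborel)"
  have If: "I < \<top>" unfolding I_def N_def by (rule poly_decay_integral)
  define I' where "I' = enn2real I"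
  have II: "I = ennreal I'" "I' \<ge> 0" unfolding I'_def using If by (auto simp: less_top)
  define L where "L = B * (I' + 1) / \<delta>"
  have L: "L \<ge> 0" unfolding L_def using B II d by simp
  have pt: "indicator {v. L < norm v} v * ennreal (exp (- a * norm v^2 + \<gamma> * norm v))
      \<le> ennreal (B / (1 + L)) * ennreal (1 / (1 + norm (v::real^'d)) ^ (N + 2))" for v
  proof (cases "L < norm v")
    case True
    have "exp (- a * norm v^2 + \<gamma> * norm v) \<le> B / (1 + norm v) ^ (N + 3)" using B by simp
    also have "\<dots> = (B / (1 + norm v)) * (1 / (1 + norm v) ^ (N + 2))"
    proof -
      have "N + 3 = Suc (N + 2)" by simp
      then have "(1 + norm v) ^ (N + 3) = (1 + norm v) * (1 + norm v) ^ (N + 2)" by (simp only: power_Suc)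
      then show ?thesis by simp
    qed
    also have "\<dots> \<le> (B / (1 + L)) * (1 / (1 + norm v) ^ (N + 2))"
      using True L B by (intro mult_right_mono divide_left_mono) auto
    finally show ?thesis using True B L by (simp add: ennreal_mult'[symmetric] ennreal_leI)
  qed simp
  have "(\<integral>\<^sup>+ v. indicator {v. L < norm v} v * ennreal (exp (- a * norm (v::real^'d)^2 + \<gamma> * norm v)) \<partial>lborel)
     \<le> (\<integral>\<^sup>+ v. ennreal (B / (1 + L)) * ennreal (1 / (1 + norm (v::real^'d)) ^ (N + 2)) \<partial>lborel)"
    by (intro nn_integral_mono pt)
  also have "\<dots> = ennreal (B / (1 + L)) * I"
    unfolding I_def by (rule nn_integral_cmult) measurable
  also have "\<dots> = ennreal (B / (1 + L) * I')" unfolding II(1) by (rule ennreal_mult[symmetric]) (use B L II in auto)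
  also have "\<dots> < ennreal \<delta>"
  proof (rule ennreal_lessI[OF d])
    have "B * I' < B * (I' + 1)" using B by simp
    also have "B * (I' + 1) = \<delta> * L" unfolding L_def using d by simp
    also have "\<delta> * L < \<delta> * (1 + L)" using d by simp
    finally show "B / (1 + L) * I' < \<delta>" using L by (simp add: field_simps)
  qed
  finally show ?thesis using L by blast
qed

lemma gauss_rad_int:
  fixes a \<gamma> :: real
  assumes a: "a > 0"
  shows "(\<integral>\<^sup>+ v. ennreal (exp (- a * norm (v::real^'d)^2 + \<gamma> * norm v)) \<partial>lborel) < \<top>"
proof -
  obtain L where L: "L \<ge> 0" "(\<integral>\<^sup>+ v. indicator {v. L < norm v} v * ennreal (exp (- a * norm (v::real^'d)^2 + \<gamma> * norm v)) \<partial>lborel) < ennreal 1"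
    using gauss_rad_tail[OF a, of 1 \<gamma>] by auto
  define f where "f v = ennreal (exp (- a * norm (v::real^'d)^2 + \<gamma> * norm v))" for v
  have fb: "f v \<le> ennreal (exp (\<gamma>^2 / (4 * a)))" for v
    unfolding f_def using quad_bound[OF a, of "norm v" \<gamma>] by (intro ennreal_leI) auto
  have "(\<integral>\<^sup>+ v. f v \<partial>lborel) \<le> (\<integral>\<^sup>+ v. indicator (cball 0 L) v * ennreal (exp (\<gamma>^2 / (4 * a))) + indicator {v. L < norm v} v * f v \<partial>lborel)"
  proof (intro nn_integral_mono)
    fix v show "f v \<le> indicator (cball 0 L) v * ennreal (exp (\<gamma>^2 / (4 * a))) + indicator {v. L < norm v} v * f v"
      using fb[of v] by (cases "L < norm v") auto
  qed
  also have "\<dots> = (\<integral>\<^sup>+ v. indicator (cball (0::real^'d) L) v * ennreal (exp (\<gamma>^2 / (4 * a))) \<partial>lborel) + (\<integral>\<^sup>+ v. indicator {v. L < norm v} v * f v \<partial>lborel)"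
  proof -
    have [measurable]: "cball (0::real^'d) L \<in> sets borel" by simp
    have [measurable]: "{v::real^'d. L < norm v} \<in> sets borel" by measurable
    show ?thesis unfolding f_def by (rule nn_integral_add) measurable
  qed
  also have "\<dots> < \<top>"
  proof -
    have i1: "(\<integral>\<^sup>+ v. indicator (cball (0::real^'d) L) v * ennreal (exp (\<gamma>^2 / (4 * a))) \<partial>lborel)
        = ennreal (exp (\<gamma>^2 / (4 * a))) * emeasure lborel (cball (0::real^'d) L)"
      by (subst mult.commute) (simp add: nn_integral_cmult_indicator)
    have "emeasure lborel (cball (0::real^'d) L) < \<top>" using emeasure_lborel_cball_finite by (simp add: less_top)
    then have a1: "(\<integral>\<^sup>+ v. indicator (cball (0::real^'d) L) v * ennreal (exp (\<gamma>^2 / (4 * a))) \<partial>lborel) < \<top>"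
      unfolding i1 by (simp add: ennreal_mult_less_top)
    have a2: "(\<integral>\<^sup>+ v. indicator {v. L < norm v} v * f v \<partial>lborel) < \<top>"
      unfolding f_def by (rule order.strict_trans[OF L(2) ennreal_less_top])
    show ?thesis using a1 a2 by (simp add: less_top)
  qed
  finally show ?thesis unfolding f_def .
qed

lemma nn_integral_translate:
  fixes f :: "'a::euclidean_space \<Rightarrow> ennreal" and w :: 'a
  assumes f: "f \<in> borel_measurable borel"
  shows "(\<integral>\<^sup>+ y. f (y - w) \<partial>lborel) = (\<integral>\<^sup>+ v. f v \<partial>lborel)"
proof -
  have "(\<integral>\<^sup>+ v. f v \<partial>lborel) = (\<integral>\<^sup>+ v. f v \<partial>distr lborel borel ((+) (- w)))"
    by (simp add: lborel_distr_plus)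
  also have "\<dots> = (\<integral>\<^sup>+ x. f (- w + x) \<partial>lborel)"
    using f by (subst nn_integral_distr) auto
  finally show ?thesis by (simp add: add.commute)
qed



lemma gd_cont: "continuous_on UNIV (gaussian_density m S)"
proof -
  have c1: "continuous_on UNIV (\<lambda>x. matrix_inv S *v (x - m))"
    by (rule continuous_on_compose2[OF matrix_vector_mult_linear_continuous_on[of UNIV "matrix_inv S"], of UNIV "\<lambda>x. x - m"])
      (auto intro!: continuous_intros)
  have eq: "gaussian_density m S = (\<lambda>x. exp (- ((x - m) \<bullet> (matrix_inv S *v (x - m))) / 2) * (1 / sqrt ((2 * pi) ^ CARD('a) * det S)))"
    by (simp add: gaussian_density_def fun_eq_iff)
  show ?thesis by (subst eq) (intro continuous_intros c1, simp)
qed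

lemma gd_meas[measurable]: "gaussian_density m S \<in> borel_measurable borel"
  using gd_cont by (rule borel_measurable_continuous_onI)

locale fkl =
  fixes F :: "real^'d \<Rightarrow> real^'d" and m :: "real^'d" and S :: "real^'d^'d"
    and E :: "(real^'d) set" and G :: "real^'d \<Rightarrow> real"
  assumes Fm[measurable]: "F \<in> borel_measurable borel"
    and Gm[measurable]: "(\<lambda>y. ennreal (G y) * indicator E y) \<in> borel_measurable borel"
begin

abbreviation "P \<equiv> fk_semigroup F m S E G"

definition kern :: "real^'d \<Rightarrow> real^'d \<Rightarrow> ennreal" where
  "kern x y = ennreal (gaussian_density m S (y - F x)) * (ennreal (G y) * indicator E y)"

lemma P_Suc: "P (Suc n) f x = (\<integral>\<^sup>+ y. kern x y * P n f y \<partial>lborel)"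
  by (simp add: kern_def mult.assoc)

lemma P_0: "P 0 f x = f x" by simp

lemma kern_meas2[measurable]: "(\<lambda>p. kern (fst p) (snd p)) \<in> borel_measurable (lborel \<Otimes>\<^sub>M lborel)"
proof -
  have [measurable]: "(\<lambda>p. ennreal (G (snd p)) * indicator E (snd p)) \<in> borel_measurable (lborel \<Otimes>\<^sub>M lborel)"
    using measurable_compose[OF measurable_snd Gm[folded measurable_lborel1]] by simp
  show ?thesis unfolding kern_def by measurable
qed

lemma kern_meas[measurable]: "kern x \<in> borel_measurable borel"
  unfolding kern_def by measurable

lemma P_meas[measurable]: "f \<in> borel_measurable borel \<Longrightarrow> P n f \<in> borel_measurable borel"
proof (induction n)
  case 0 then show ?case by simp
next
  case (Suc n)
  have [measurable]: "P n f \<in> borel_measurable borel" by (rule Suc.IH[OF Suc.prems])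
  have "(\<lambda>p. kern (fst p) (snd p) * P n f (snd p)) \<in> borel_measurable (lborel \<Otimes>\<^sub>M lborel)"
    by measurable
  then have "(\<lambda>x. \<integral>\<^sup>+ y. kern x y * P n f y \<partial>lborel) \<in> borel_measurable lborel"
    by (intro lborel.borel_measurable_nn_integral) (simp add: case_prod_beta)
  then show ?case unfolding P_Suc[abs_def] by simp
qed

lemma P_mono: "(\<And>y. f y \<le> g y) \<Longrightarrow> P n f x \<le> P n g x"
proof (induction n arbitrary: x)
  case 0 then show ?case by simp
next
  case (Suc n)
  show ?case unfolding P_Suc by (intro nn_integral_mono mult_left_mono Suc) auto
qed

lemma P_mono_E: "(\<And>y. y \<in> E \<Longrightarrow> f y \<le> g y) \<Longrightarrow> P (Suc n) f x \<le> P (Suc n) g x"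
proof (induction n arbitrary: x)
  case 0
  show ?case unfolding P_Suc P_0 by (intro nn_integral_mono) (auto simp: kern_def intro!: mult_left_mono 0 split: split_indicator)
next
  case (Suc n)
  show ?case unfolding P_Suc[of "Suc n"] by (intro nn_integral_mono mult_left_mono Suc) auto
qed

lemma P_comp: "P (a + b) f x = P a (P b f) x"
proof (induction a arbitrary: x)
  case 0 then show ?case by simp
next
  case (Suc a)
  show ?case unfolding add_Suc P_Suc Suc ..
qed

lemma P_cmult: "f \<in> borel_measurable borel \<Longrightarrow> P n (\<lambda>y. c * f y) x = c * P n f x"
proof (induction n arbitrary: x)
  case 0 then show ?case by simp
next
  case (Suc n)
  have [measurable]: "P n f \<in> borel_measurable borel" using Suc.prems by (rule P_meas)
  have "P (Suc n) (\<lambda>y. c * f y) x = (\<integral>\<^sup>+ y. c * (kern x y * P n f y) \<partial>lborel)"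
    unfolding P_Suc Suc.IH[OF Suc.prems] by (simp add: ac_simps)
  also have "\<dots> = c * P (Suc n) f x" unfolding P_Suc by (rule nn_integral_cmult) measurable
  finally show ?case .
qed

lemma P_add: "f \<in> borel_measurable borel \<Longrightarrow> g \<in> borel_measurable borel \<Longrightarrow>
    P n (\<lambda>y. f y + g y) x = P n f x + P n g x"
proof (induction n arbitrary: x)
  case 0 then show ?case by simp
next
  case (Suc n)
  have [measurable]: "P n f \<in> borel_measurable borel" "P n g \<in> borel_measurable borel"
    using Suc.prems by (auto intro: P_meas)
  have "P (Suc n) (\<lambda>y. f y + g y) x = (\<integral>\<^sup>+ y. kern x y * P n f y + kern x y * P n g y \<partial>lborel)"
    unfolding P_Suc Suc.IH[OF Suc.prems] by (simp add: distrib_left)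
  also have "\<dots> = P (Suc n) f x + P (Suc n) g x" unfolding P_Suc by (rule nn_integral_add) measurable
  finally show ?case .
qed

end



lemma max_mult_ennreal: "max a b * (c::ennreal) = max (a * c) (b * c)"
proof (cases "a \<le> b")
  case True
  then have "a * c \<le> b * c" by (rule mult_right_mono) simp
  then show ?thesis using True by (simp add: max_absorb2)
next
  case False
  then have "b * c \<le> a * c" by (intro mult_right_mono) auto
  then show ?thesis using False by (simp add: max_absorb1)
qed

lemma ennreal_cancel_right: "a * ennreal c \<le> b * ennreal c \<Longrightarrow> c > 0 \<Longrightarrow> a \<le> (b::ennreal)"
  using ennreal_mult_le_mult_iff[of "ennreal c" a b] by (simp add: mult.commute)

locale g3 = fkl F m S E G
  for F :: "real^'d \<Rightarrow> real^'d" and m S E G +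
  fixes K :: "(real^'d) set" and \<psi>1 \<psi>2 :: "real^'d \<Rightarrow> real"
    and \<theta>1 \<theta>2 c\<psi> \<beta> Rr U Lo a' b' C :: real
  assumes K_sub: "K \<subseteq> E" and K_meas[measurable]: "K \<in> sets borel" and K_bdd: "\<forall>y\<in>K. norm y \<le> Rr"
    and psi1_eq: "\<psi>1 = (\<lambda>y. exp (\<beta> * norm y))" and beta_pos: "\<beta> > 0"
    and lyap: "\<forall>z\<in>E. z \<notin> K \<longrightarrow> P 1 (\<lambda>y. ennreal (\<psi>1 y)) z \<le> ennreal \<theta>1 * ennreal (\<psi>1 z)"
    and psi2_meas[measurable]: "\<psi>2 \<in> borel_measurable borel"
    and psi2_le: "\<forall>y. \<psi>2 y \<le> indicator K y * \<psi>1 y"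
    and psi2_grow: "\<forall>n y. ennreal (\<theta>2 ^ n) * ennreal (\<psi>2 y) \<le> P n (\<lambda>y. ennreal (\<psi>2 y)) y"
    and psi2_low: "\<forall>y\<in>K. c\<psi> * \<psi>1 y \<le> \<psi>2 y"
    and th1_pos: "\<theta>1 > 0" and th12: "\<theta>1 \<le> \<theta>2" and cpsi_pos: "c\<psi> > 0"
    and kup: "\<forall>y\<in>K. \<forall>z. gaussian_density m S (z - F y) \<le> U * exp (- a' * norm z ^ 2)"
    and klo: "\<forall>y\<in>K. \<forall>z. Lo * exp (- b' * norm z ^ 2) \<le> gaussian_density m S (z - F y)"
    and U_pos: "U > 0" and Lo_pos: "Lo > 0" and a'_pos: "a' > 0" and b'_pos: "b' > 0"
    and C_pos: "C > 0" and Ggrow: "\<forall>z\<in>E. G z \<le> C * exp (norm z)"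
begin

abbreviation "\<psi>1e \<equiv> (\<lambda>y. ennreal (\<psi>1 y))"

lemma psi1_pos: "\<psi>1 y > 0" unfolding psi1_eq by simp
lemma psi1_ge1: "\<psi>1 y \<ge> 1" unfolding psi1_eq using beta_pos by simp
lemma psi1_meas[measurable]: "\<psi>1 \<in> borel_measurable borel" unfolding psi1_eq by measurable
lemma psi1_K: "y \<in> K \<Longrightarrow> \<psi>1 y \<le> exp (\<beta> * Rr)"
  unfolding psi1_eq using K_bdd beta_pos by (simp add: mult_left_mono)

definition R :: "nat \<Rightarrow> real^'d \<Rightarrow> ennreal" where
  "R n y = P n \<psi>1e y * ennreal (1 / \<psi>1 y)"

lemma R_id: "P n \<psi>1e y = R n y * \<psi>1e y"
proof -
  have "ennreal (1 / \<psi>1 y) * ennreal (\<psi>1 y) = 1"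
    using psi1_pos[of y] by (simp add: ennreal_mult[symmetric])
  then show ?thesis unfolding R_def by (simp add: mult.assoc)
qed

lemma R_le: "R n y \<le> P n \<psi>1e y"
proof -
  have "ennreal (1 / \<psi>1 y) \<le> 1" using psi1_ge1[of y] by simp
  then show ?thesis unfolding R_def using mult_left_mono[of "ennreal (1 / \<psi>1 y)" 1 "P n \<psi>1e y"] by simp
qed

lemma R_0: "R 0 y = 1"
  unfolding R_def using psi1_pos[of y] by (simp add: ennreal_mult[symmetric])

definition Sup :: "nat \<Rightarrow> ennreal" where "Sup j = (SUP w\<in>K. R j w)"

primrec T :: "nat \<Rightarrow> ennreal" where
  "T 0 = 1"
| "T (Suc k) = max (Sup (Suc k)) (ennreal \<theta>1 * T k)"

lemma kern_zero: "y \<notin> E \<Longrightarrow> kern x y = 0" unfolding kern_def by simp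

lemma T_bound: "z \<in> E \<Longrightarrow> P k \<psi>1e z \<le> T k * \<psi>1e z"
proof (induction k arbitrary: z)
  case 0 then show ?case by simp
next
  case (Suc k)
  show ?case
  proof (cases "z \<in> K")
    case True
    have "P (Suc k) \<psi>1e z = R (Suc k) z * \<psi>1e z" by (rule R_id)
    also have "\<dots> \<le> Sup (Suc k) * \<psi>1e z"
      unfolding Sup_def using True by (intro mult_right_mono SUP_upper) auto
    also have "\<dots> \<le> T (Suc k) * \<psi>1e z" by (intro mult_right_mono) auto
    finally show ?thesis .
  next
    case False
    have "P (Suc k) \<psi>1e z = (\<integral>\<^sup>+ y. kern z y * P k \<psi>1e y \<partial>lborel)" by (rule P_Suc)
    also have "\<dots> \<le> (\<integral>\<^sup>+ y. T k * (kern z y * \<psi>1e y) \<partial>lborel)"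
    proof (intro nn_integral_mono)
      fix y
      show "kern z y * P k \<psi>1e y \<le> T k * (kern z y * \<psi>1e y)"
      proof (cases "y \<in> E")
        case True
        then have "kern z y * P k \<psi>1e y \<le> kern z y * (T k * \<psi>1e y)" by (intro mult_left_mono Suc.IH) auto
        then show ?thesis by (simp add: ac_simps)
      qed (simp add: kern_zero)
    qed
    also have "\<dots> = T k * (\<integral>\<^sup>+ y. kern z y * \<psi>1e y \<partial>lborel)"
      by (rule nn_integral_cmult) measurable
    also have "(\<integral>\<^sup>+ y. kern z y * \<psi>1e y \<partial>lborel) = P 1 \<psi>1e z"
      using P_Suc[of 0 \<psi>1e z] by simp
    also have "T k * P 1 \<psi>1e z \<le> T k * (ennreal \<theta>1 * \<psi>1e z)"
      using lyap Suc.prems False by (intro mult_left_mono) auto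
    also have "\<dots> \<le> T (Suc k) * \<psi>1e z"
      by (simp add: mult.assoc[symmetric] mult.commute[of "T k"] mult_right_mono)
    finally show ?thesis .
  qed
qed

lemma psi2_le_e: "ennreal (\<psi>2 y) \<le> indicator K y * \<psi>1e y"
proof (cases "y \<in> K")
  case True then show ?thesis using psi2_le[rule_format, of y] by (simp add: ennreal_leI)
next
  case False then have "\<psi>2 y \<le> 0" using psi2_le[rule_format, of y] by simp
  then show ?thesis using False by (simp add: ennreal_neg)
qed

lemma psi2_le_e1: "ennreal (\<psi>2 y) \<le> \<psi>1e y"
  using psi2_le_e[of y] by (cases "y \<in> K") auto

lemma P_psi2_le: "P n (\<lambda>y. ennreal (\<psi>2 y)) y \<le> P n (\<lambda>u. indicator K u * \<psi>1e u) y"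
  by (intro P_mono psi2_le_e)

lemma growth_lb: "y \<in> K \<Longrightarrow> ennreal (\<theta>2 ^ n * c\<psi>) \<le> R n y"
proof -
  assume y: "y \<in> K"
  have "ennreal (\<theta>2 ^ n * c\<psi>) * \<psi>1e y = ennreal (\<theta>2 ^ n) * ennreal (c\<psi> * \<psi>1 y)"
    using cpsi_pos th1_pos th12 psi1_pos[of y] by (simp add: ennreal_mult[symmetric] mult.assoc)
  also have "\<dots> \<le> ennreal (\<theta>2 ^ n) * ennreal (\<psi>2 y)"
    using psi2_low y by (intro mult_left_mono ennreal_leI) auto
  also have "\<dots> \<le> P n (\<lambda>y. ennreal (\<psi>2 y)) y" using psi2_grow by blast
  also have "\<dots> \<le> P n \<psi>1e y"
    by (rule P_mono) (simp add: psi2_le_e1)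
  also have "\<dots> = R n y * \<psi>1e y" by (rule R_id)
  finally have "ennreal (\<theta>2 ^ n * c\<psi>) * \<psi>1e y \<le> R n y * \<psi>1e y" .
  then show ?thesis using psi1_pos[of y] by (rule ennreal_cancel_right)
qed

lemma psi2_chain: "y \<in> K \<Longrightarrow> ennreal (\<theta>2 ^ k * c\<psi>) * \<psi>1e y \<le> P k (\<lambda>u. indicator K u * \<psi>1e u) y"
proof -
  assume y: "y \<in> K"
  have "ennreal (\<theta>2 ^ k * c\<psi>) * \<psi>1e y = ennreal (\<theta>2 ^ k) * ennreal (c\<psi> * \<psi>1 y)"
    using cpsi_pos th1_pos th12 psi1_pos[of y] by (simp add: ennreal_mult[symmetric] mult.assoc)
  also have "\<dots> \<le> ennreal (\<theta>2 ^ k) * ennreal (\<psi>2 y)"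
    using psi2_low y by (intro mult_left_mono ennreal_leI) auto
  also have "\<dots> \<le> P k (\<lambda>y. ennreal (\<psi>2 y)) y" using psi2_grow by blast
  also have "\<dots> \<le> P k (\<lambda>u. indicator K u * \<psi>1e u) y" by (rule P_psi2_le)
  finally show ?thesis .
qed

lemma sup_growth:
  assumes c3: "c3 \<ge> 1" and Cj: "\<forall>y\<in>K. \<forall>y'\<in>K. R j y \<le> ennreal c3 * R j y'"
    and jn: "j \<le> n" and y': "y' \<in> K"
  shows "Sup j * ennreal (\<theta>2 ^ (n - j) * c\<psi> / c3) \<le> R n y'"
proof -
  have inv: "ennreal (1 / c3) * ennreal c3 = 1" using c3 by (simp add: ennreal_mult[symmetric])
  have h1: "ennreal (1 / c3) * Sup j * \<psi>1e u \<le> P j \<psi>1e u" if u: "u \<in> K" for u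
  proof -
    have "Sup j \<le> ennreal c3 * R j u" unfolding Sup_def using Cj u by (intro SUP_least) auto
    then have "ennreal (1 / c3) * Sup j \<le> ennreal (1 / c3) * (ennreal c3 * R j u)" by (rule mult_left_mono) simp
    also have "\<dots> = R j u" using inv by (simp add: mult.assoc[symmetric])
    finally have "ennreal (1 / c3) * Sup j * \<psi>1e u \<le> R j u * \<psi>1e u" by (rule mult_right_mono) simp
    then show ?thesis using R_id by simp
  qed
  define k where "k = n - j"
  have nk: "n = k + j" unfolding k_def using jn by simp
  have "ennreal (1 / c3) * Sup j * (ennreal (\<theta>2 ^ k * c\<psi>) * \<psi>1e y')
      \<le> ennreal (1 / c3) * Sup j * P k (\<lambda>u. indicator K u * \<psi>1e u) y'"
    using psi2_chain[OF y'] by (rule mult_left_mono) simp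
  also have "\<dots> = P k (\<lambda>u. (ennreal (1 / c3) * Sup j) * (indicator K u * \<psi>1e u)) y'"
    by (rule P_cmult[symmetric]) measurable
  also have "\<dots> \<le> P k (P j \<psi>1e) y'"
  proof (rule P_mono)
    fix u show "ennreal (1 / c3) * Sup j * (indicator K u * \<psi>1e u) \<le> P j \<psi>1e u"
      using h1[of u] by (cases "u \<in> K") auto
  qed
  also have "\<dots> = P n \<psi>1e y'" unfolding nk by (rule P_comp[symmetric])
  also have "\<dots> = R n y' * \<psi>1e y'" by (rule R_id)
  finally have "(ennreal (1 / c3) * Sup j * ennreal (\<theta>2 ^ k * c\<psi>)) * \<psi>1e y' \<le> R n y' * \<psi>1e y'"
    by (simp add: mult.assoc)
  then have "ennreal (1 / c3) * Sup j * ennreal (\<theta>2 ^ k * c\<psi>) \<le> R n y'"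
    using psi1_pos[of y'] by (rule ennreal_cancel_right)
  moreover have "ennreal (1 / c3) * Sup j * ennreal (\<theta>2 ^ k * c\<psi>) = Sup j * ennreal (\<theta>2 ^ k * c\<psi> / c3)"
  proof -
    have "ennreal (1 / c3) * ennreal (\<theta>2 ^ k * c\<psi>) = ennreal (\<theta>2 ^ k * c\<psi> / c3)"
      using c3 cpsi_pos th1_pos th12 by (simp add: ennreal_mult[symmetric])
    then show ?thesis by (metis mult.assoc mult.commute)
  qed
  ultimately show ?thesis unfolding k_def by simp
qed

lemma T_growth:
  assumes c3: "c3 \<ge> 1" and IH: "\<forall>j<Suc n'. \<forall>y\<in>K. \<forall>y'\<in>K. R j y \<le> ennreal c3 * R j y'"
    and y': "y' \<in> K"
  shows "mm \<le> n' \<Longrightarrow> T mm * ennreal (\<theta>2 ^ (Suc n' - mm) * c\<psi> / c3) \<le> R (Suc n') y'"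
proof (induction mm)
  case 0
  have "ennreal (\<theta>2 ^ Suc n' * c\<psi> / c3) \<le> ennreal (\<theta>2 ^ Suc n' * c\<psi>)"
  proof (intro ennreal_leI)
    have "0 \<le> \<theta>2 ^ Suc n' * c\<psi>" using cpsi_pos th1_pos th12 by simp
    then show "\<theta>2 ^ Suc n' * c\<psi> / c3 \<le> \<theta>2 ^ Suc n' * c\<psi>"
      using frac_le[of "\<theta>2 ^ Suc n' * c\<psi>" "\<theta>2 ^ Suc n' * c\<psi>" 1 c3] c3 by simp
  qed
  also have "\<dots> \<le> R (Suc n') y'" by (rule growth_lb[OF y'])
  finally show ?case by simp
next
  case (Suc mm)
  define X where "X = ennreal (\<theta>2 ^ (Suc n' - Suc mm) * c\<psi> / c3)"
  have a: "Sup (Suc mm) * X \<le> R (Suc n') y'"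
    unfolding X_def using Suc.prems IH y' c3 by (intro sup_growth) auto
  have "ennreal \<theta>1 * T mm * X \<le> T mm * ennreal (\<theta>2 ^ (Suc n' - mm) * c\<psi> / c3)"
  proof -
    have e: "Suc n' - mm = Suc (Suc n' - Suc mm)" using Suc.prems by simp
    have "\<theta>1 * (\<theta>2 ^ (Suc n' - Suc mm) * c\<psi> / c3) \<le> \<theta>2 ^ (Suc n' - mm) * c\<psi> / c3"
      unfolding e using th12 th1_pos cpsi_pos c3
      by (simp add: mult.assoc divide_right_mono mult_right_mono)
    then have "ennreal \<theta>1 * X \<le> ennreal (\<theta>2 ^ (Suc n' - mm) * c\<psi> / c3)"
      unfolding X_def ennreal_mult'[OF less_imp_le[OF th1_pos], symmetric] by (rule ennreal_leI)
    then show ?thesis by (metis mult.assoc mult.commute mult_left_mono zero_le)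
  qed
  also have "\<dots> \<le> R (Suc n') y'" using Suc.IH Suc.prems by simp
  finally have b: "ennreal \<theta>1 * T mm * X \<le> R (Suc n') y'" .
  show ?case unfolding X_def[symmetric] using a b by (simp add: max_mult_ennreal)
qed

lemma gd_nonneg_K: "y \<in> K \<Longrightarrow> gaussian_density m S (z - F y) \<ge> 0"
  using klo Lo_pos by (meson exp_gt_zero less_imp_le mult_pos_pos order.trans)

lemma G3_main: "\<exists>c3\<ge>1. \<forall>n. \<forall>y\<in>K. \<forall>y'\<in>K. R n y \<le> ennreal c3 * R n y'"
proof -
  define \<epsilon> where "\<epsilon> = \<theta>2 * c\<psi> / (2 * U * C)"
  have eps: "\<epsilon> > 0" unfolding \<epsilon>_def using th1_pos th12 cpsi_pos U_pos C_pos by simp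
  obtain L where L: "L \<ge> 0"
    "(\<integral>\<^sup>+ z. indicator {z. L < norm z} z * ennreal (exp (- a' * norm (z::real^'d) ^ 2 + (1 + \<beta>) * norm z)) \<partial>lborel) < ennreal \<epsilon>"
    using gauss_rad_tail[OF a'_pos eps, of "1 + \<beta>"] by blast
  define A0 where "A0 = U * exp (b' * L^2) / Lo"
  have A0: "A0 \<ge> 0" unfolding A0_def using U_pos Lo_pos by simp
  define c3 where "c3 = max 1 (2 * (A0 * exp (\<beta> * Rr)))"
  have c3: "c3 \<ge> 1" "A0 * exp (\<beta> * Rr) \<le> c3 / 2" unfolding c3_def by auto
  have [measurable]: "{z::real^'d. L < norm z} \<in> sets borel" by measurable
  have "\<forall>y\<in>K. \<forall>y'\<in>K. R n y \<le> ennreal c3 * R n y'" for n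
  proof (induction n rule: less_induct)
    case (less n)
    show ?case
    proof (cases n)
      case 0 then show ?thesis using c3 by (simp add: R_0)
    next
      case (Suc n')
      have IH: "\<forall>j<Suc n'. \<forall>y\<in>K. \<forall>y'\<in>K. R j y \<le> ennreal c3 * R j y'" using less.IH Suc by blast
      show ?thesis unfolding Suc
      proof (intro ballI)
        fix y y' assume y: "y \<in> K" and y': "y' \<in> K"
        have TB: "T n' * ennreal (\<theta>2 * c\<psi> / c3) \<le> R (Suc n') y'"
          using T_growth[OF c3(1) IH y', of n'] by simp
        have pt: "kern y z * P n' \<psi>1e z \<le> ennreal A0 * (kern y' z * P n' \<psi>1e z)
            + ennreal (U * C) * T n' * (indicator {z. L < norm z} z * ennreal (exp (- a' * norm z ^ 2 + (1 + \<beta>) * norm z)))" for z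
        proof (cases "z \<in> E")
          case False then show ?thesis by (simp add: kern_zero)
        next
          case zE: True
          show ?thesis
          proof (cases "L < norm z")
            case False
            have gd: "gaussian_density m S (z - F y) \<le> A0 * gaussian_density m S (z - F y')"
            proof -
              have "gaussian_density m S (z - F y) \<le> U * exp (- a' * norm z ^ 2)" using kup y by blast
              also have "\<dots> \<le> U * exp (b' * L^2 - b' * norm z ^ 2)"
              proof -
                have "norm z ^ 2 \<le> L ^ 2" using False by (intro power_mono) auto
                then have h2: "0 \<le> b' * (L^2 - norm z ^ 2)" using b'_pos by simp
                have h1: "0 \<le> a' * norm z ^ 2" using a'_pos by simp
                have "b' * (L^2 - norm z ^ 2) = b' * L^2 - b' * norm z ^ 2" by (simp add: right_diff_distrib)
                then have "- a' * norm z ^ 2 \<le> b' * L^2 - b' * norm z ^ 2" using h1 h2 by linarith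
                then show ?thesis using U_pos by simp
              qed
              also have "\<dots> = A0 * (Lo * exp (- b' * norm z ^ 2))"
                unfolding A0_def using Lo_pos by (simp add: exp_diff exp_minus field_simps)
              also have "\<dots> \<le> A0 * gaussian_density m S (z - F y')"
                using klo y' A0 by (intro mult_left_mono) auto
              finally show ?thesis .
            qed
            have "kern y z \<le> ennreal A0 * kern y' z"
            proof -
              have "ennreal (gaussian_density m S (z - F y)) \<le> ennreal A0 * ennreal (gaussian_density m S (z - F y'))"
                using gd A0 gd_nonneg_K[OF y'] by (simp add: ennreal_mult[symmetric] ennreal_leI)
              then have "ennreal (gaussian_density m S (z - F y)) * (ennreal (G z) * indicator E z)
                 \<le> (ennreal A0 * ennreal (gaussian_density m S (z - F y'))) * (ennreal (G z) * indicator E z)"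
                by (rule mult_right_mono) simp
              then show ?thesis unfolding kern_def by (simp add: mult.assoc)
            qed
            then have "kern y z * P n' \<psi>1e z \<le> (ennreal A0 * kern y' z) * P n' \<psi>1e z"
              by (rule mult_right_mono) simp
            then have "kern y z * P n' \<psi>1e z \<le> ennreal A0 * (kern y' z * P n' \<psi>1e z)"
              by (simp add: mult.assoc)
            then show ?thesis by (rule add_increasing2[rotated]) simp
          next
            case True
            have "kern y z * P n' \<psi>1e z \<le> ennreal (U * exp (- a' * norm z ^ 2)) * ennreal (C * exp (norm z)) * (T n' * \<psi>1e z)"
            proof -
              have "kern y z = ennreal (gaussian_density m S (z - F y)) * ennreal (G z)"
                unfolding kern_def using zE by simp
              also have "\<dots> \<le> ennreal (U * exp (- a' * norm z ^ 2)) * ennreal (C * exp (norm z))"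
                using kup y Ggrow zE by (intro mult_mono ennreal_leI) auto
              finally show ?thesis using T_bound[OF zE, of n'] by (intro mult_mono) auto
            qed
            also have "\<dots> = ennreal (U * C) * T n' * ennreal (exp (- a' * norm z ^ 2 + (1 + \<beta>) * norm z))"
            proof -
              have "U * exp (- a' * norm z ^ 2) * (C * exp (norm z)) * \<psi>1 z = U * C * exp (- a' * norm z ^ 2 + (1 + \<beta>) * norm z)"
                unfolding psi1_eq by (simp add: exp_add[symmetric] algebra_simps)
              then have eq: "ennreal (U * exp (- a' * norm z ^ 2)) * ennreal (C * exp (norm z)) * \<psi>1e z
                  = ennreal (U * C) * ennreal (exp (- a' * norm z ^ 2 + (1 + \<beta>) * norm z))"
                using U_pos C_pos psi1_pos[of z] by (simp add: ennreal_mult[symmetric])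
              have "ennreal (U * exp (- a' * norm z ^ 2)) * ennreal (C * exp (norm z)) * (T n' * \<psi>1e z)
                 = T n' * (ennreal (U * exp (- a' * norm z ^ 2)) * ennreal (C * exp (norm z)) * \<psi>1e z)"
                by (simp only: ac_simps)
              also have "\<dots> = T n' * (ennreal (U * C) * ennreal (exp (- a' * norm z ^ 2 + (1 + \<beta>) * norm z)))"
                by (simp only: eq)
              finally show ?thesis by (simp only: ac_simps)
            qed
            also have "\<dots> = ennreal (U * C) * T n' * (indicator {z. L < norm z} z * ennreal (exp (- a' * norm z ^ 2 + (1 + \<beta>) * norm z)))"
              using True by simp
            finally show ?thesis by (rule add_increasing[rotated]) simp
          qed
        qed
        have "P (Suc n') \<psi>1e y = (\<integral>\<^sup>+ z. kern y z * P n' \<psi>1e z \<partial>lborel)" by (rule P_Suc)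
        also have "\<dots> \<le> (\<integral>\<^sup>+ z. ennreal A0 * (kern y' z * P n' \<psi>1e z)
            + ennreal (U * C) * T n' * (indicator {z. L < norm z} z * ennreal (exp (- a' * norm z ^ 2 + (1 + \<beta>) * norm z))) \<partial>lborel)"
          by (intro nn_integral_mono pt)
        also have "\<dots> = ennreal A0 * P (Suc n') \<psi>1e y' + ennreal (U * C) * T n' *
            (\<integral>\<^sup>+ z. indicator {z. L < norm z} z * ennreal (exp (- a' * norm (z::real^'d) ^ 2 + (1 + \<beta>) * norm z)) \<partial>lborel)"
        proof -
          have i1: "(\<integral>\<^sup>+ z. ennreal A0 * (kern y' z * P n' \<psi>1e z) \<partial>lborel) = ennreal A0 * P (Suc n') \<psi>1e y'"
            unfolding P_Suc by (rule nn_integral_cmult) measurable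
          have i2: "(\<integral>\<^sup>+ z. ennreal (U * C) * T n' * (indicator {z. L < norm z} z * ennreal (exp (- a' * norm (z::real^'d) ^ 2 + (1 + \<beta>) * norm z))) \<partial>lborel)
             = ennreal (U * C) * T n' * (\<integral>\<^sup>+ z. indicator {z. L < norm z} z * ennreal (exp (- a' * norm (z::real^'d) ^ 2 + (1 + \<beta>) * norm z)) \<partial>lborel)"
            by (rule nn_integral_cmult) measurable
          show ?thesis by (subst nn_integral_add) (measurable, simp only: i1 i2)
        qed
        also have "\<dots> \<le> ennreal A0 * P (Suc n') \<psi>1e y' + ennreal (U * C) * T n' * ennreal \<epsilon>"
          using L(2) by (intro add_left_mono mult_left_mono) auto
        finally have main: "P (Suc n') \<psi>1e y \<le> ennreal A0 * P (Suc n') \<psi>1e y' + ennreal (U * C) * T n' * ennreal \<epsilon>" .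
        have t1: "ennreal A0 * P (Suc n') \<psi>1e y' \<le> ennreal (c3 / 2) * R (Suc n') y'"
        proof -
          have "ennreal A0 * P (Suc n') \<psi>1e y' = ennreal A0 * \<psi>1e y' * R (Suc n') y'"
            by (simp only: R_id ac_simps)
          also have "\<dots> \<le> ennreal A0 * ennreal (exp (\<beta> * Rr)) * R (Suc n') y'"
            using psi1_K[OF y'] by (intro mult_right_mono mult_left_mono ennreal_leI) auto
          also have "ennreal A0 * ennreal (exp (\<beta> * Rr)) = ennreal (A0 * exp (\<beta> * Rr))"
            using A0 by (simp add: ennreal_mult)
          also have "\<dots> \<le> ennreal (c3 / 2)" using c3 by (intro ennreal_leI) auto
          finally show ?thesis by (simp add: mult_right_mono)
        qed
        have t2: "ennreal (U * C) * T n' * ennreal \<epsilon> \<le> ennreal (c3 / 2) * R (Suc n') y'"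
        proof -
          have "ennreal (U * C) * ennreal \<epsilon> = ennreal (\<theta>2 * c\<psi> / c3) * ennreal (c3 / 2)"
          proof -
            have "U * C * \<epsilon> = \<theta>2 * c\<psi> / c3 * (c3 / 2)" unfolding \<epsilon>_def using U_pos C_pos c3 by (simp add: field_simps)
            then show ?thesis using U_pos C_pos eps c3 th1_pos th12 cpsi_pos
              by (simp add: ennreal_mult[symmetric])
          qed
          then have "ennreal (U * C) * T n' * ennreal \<epsilon> = (T n' * ennreal (\<theta>2 * c\<psi> / c3)) * ennreal (c3 / 2)"
            by (metis (no_types, lifting) mult.assoc mult.commute)
          also have "\<dots> \<le> R (Suc n') y' * ennreal (c3 / 2)" using TB by (rule mult_right_mono) simp
          finally show ?thesis by (simp add: mult.commute)
        qed
        have "R (Suc n') y \<le> P (Suc n') \<psi>1e y" by (rule R_le)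
        also have "\<dots> \<le> ennreal (c3 / 2) * R (Suc n') y' + ennreal (c3 / 2) * R (Suc n') y'"
          using main t1 t2 by (meson add_mono order.trans)
        also have "\<dots> = ennreal c3 * R (Suc n') y'"
          using c3 by (simp add: distrib_right[symmetric] ennreal_plus[symmetric])
        finally show "R (Suc n') y \<le> ennreal c3 * R (Suc n') y'" .
      qed
    qed
  qed
  then show ?thesis using c3 by blast
qed

end



lemma locally_bounded_cball:
  fixes f :: "'a::euclidean_space \<Rightarrow> 'b::real_normed_vector"
  assumes "locally_bounded_on S f"
  shows "\<exists>B. \<forall>x\<in>cball 0 r \<inter> S. norm (f x) \<le> B"
proof -
  have "\<forall>x. \<exists>e. e > 0 \<and> (\<exists>B. \<forall>y\<in>ball x e \<inter> S. norm (f y) \<le> B)"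
    using assms unfolding locally_bounded_on_def bounded_iff by fast
  then obtain e Bf where e: "\<And>x. e x > 0" and Bf: "\<And>x y. y \<in> ball x (e x) \<inter> S \<Longrightarrow> norm (f y) \<le> Bf x"
    by metis
  have cov: "cball 0 r \<subseteq> (\<Union>x\<in>cball 0 r. ball x (e x))" using e by force
  obtain T where T: "T \<subseteq> cball 0 r" "finite T" "cball 0 r \<subseteq> (\<Union>x\<in>T. ball x (e x))"
    using compactE_image[OF compact_cball[of 0 r] _ cov] by auto
  define B where "B = Max (insert 0 (Bf ` T))"
  have "norm (f y) \<le> B" if y: "y \<in> cball 0 r \<inter> S" for y
  proof -
    obtain x where x: "x \<in> T" "y \<in> ball x (e x)" using T(3) y by blast
    then have "norm (f y) \<le> Bf x" using Bf y by blast
    also have "Bf x \<le> B" unfolding B_def using T(2) x(1) by (intro Max_ge) auto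
    finally show ?thesis .
  qed
  then show ?thesis by blast
qed

lemma norm_add_sq: "norm (u + v) ^ 2 \<le> 2 * norm u ^ 2 + 2 * norm (v::'a::real_normed_vector) ^ 2"
proof -
  have "norm (u + v) ^ 2 \<le> (norm u + norm v) ^ 2" by (intro power_mono norm_triangle_ineq) auto
  also have "\<dots> \<le> 2 * norm u ^ 2 + 2 * norm v ^ 2"
    using sum_squares_bound[of "norm u" "norm v"] by (simp add: power2_eq_square algebra_simps)
  finally show ?thesis .
qed

lemma gd_bounds:
  fixes S :: "real^'d^'d"
  assumes "nondegenerate_covariance S"
  shows "\<exists>Z a b. Z > 0 \<and> a > 0 \<and> b > 0 \<and> (\<forall>v. exp (- b * norm (v - m) ^ 2) / Z \<le> gaussian_density m S v
        \<and> gaussian_density m S v \<le> exp (- a * norm (v - m) ^ 2) / Z)"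
proof -
  obtain a b where ab: "a > 0" "b > 0" "\<forall>u. a * norm u ^ 2 \<le> u \<bullet> (matrix_inv S *v u) \<and> u \<bullet> (matrix_inv S *v u) \<le> b * norm u ^ 2"
    using Q_bounds[of "matrix_inv S"] Q_pos[OF assms] by blast
  define Z where "Z = sqrt ((2 * pi) ^ CARD('d) * det S)"
  have Z: "Z > 0" unfolding Z_def using det_pos[OF assms] by simp
  have "exp (- (b/2) * norm (v - m) ^ 2) / Z \<le> gaussian_density m S v \<and> gaussian_density m S v \<le> exp (- (a/2) * norm (v - m) ^ 2) / Z" for v
  proof -
    have q: "a * norm (v - m) ^ 2 \<le> (v - m) \<bullet> (matrix_inv S *v (v - m))" "(v - m) \<bullet> (matrix_inv S *v (v - m)) \<le> b * norm (v - m) ^ 2"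
      using ab(3) by auto
    have g: "gaussian_density m S v = exp (- ((v - m) \<bullet> (matrix_inv S *v (v - m))) / 2) / Z"
      unfolding gaussian_density_def Z_def ..
    show ?thesis unfolding g using q Z by (auto intro!: divide_right_mono)
  qed
  then show ?thesis using Z ab by (intro exI[of _ Z] exI[of _ "a/2"] exI[of _ "b/2"]) auto
qed

lemma pos_measure_ball:
  assumes "E \<in> sets lborel" "emeasure lborel E > 0"
  shows "\<exists>R0>0. emeasure lborel (E \<inter> cball (0::'a::euclidean_space) R0) > 0"
proof (rule ccontr)
  assume nt: "\<not> (\<exists>R0>0. emeasure lborel (E \<inter> cball (0::'a::euclidean_space) R0) > 0)"
  have z: "emeasure lborel (E \<inter> cball (0::'a) (real n + 1)) = 0" for n
  proof -
    have "real n + 1 > 0" by simp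
    then have "\<not> 0 < emeasure lborel (E \<inter> cball (0::'a) (real n + 1))" using nt by blast
    then show ?thesis by (simp add: not_gr_zero)
  qed
  have "E = (\<Union>n. E \<inter> cball (0::'a) (real n + 1))"
  proof (safe)
    fix x assume "x \<in> E"
    obtain n where "norm x \<le> real n" using real_arch_simple by blast
    then have "norm x \<le> real n + 1" by simp
    then show "x \<in> (\<Union>n. E \<inter> cball (0::'a) (real n + 1))" using \<open>x \<in> E\<close> by auto
  qed
  then have "emeasure lborel E = emeasure lborel (\<Union>n. E \<inter> cball (0::'a) (real n + 1))" by simp
  also have "\<dots> = 0" using z assms(1) by (intro emeasure_UN_eq_0) auto
  finally show False using assms(2) by simp
qed



lemma lin_helper1: "0 < a \<Longrightarrow> x \<le> 2*y + 2*u \<Longrightarrow> u \<le> k \<Longrightarrow> -a*y \<le> a*k + -(a/2)*x" for a x y u k :: real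
proof -
  assume h: "0 < a" "x \<le> 2*y + 2*u" "u \<le> k"
  then have "x \<le> 2*y + 2*k" by linarith
  then have "(a/2)*x \<le> (a/2)*(2*y+2*k)" using h by (intro mult_left_mono) auto
  then show ?thesis by (simp add: algebra_simps)
qed

lemma lin_helper2: "0 < b \<Longrightarrow> x \<le> 2*y + 2*u \<Longrightarrow> u \<le> k \<Longrightarrow> -2*b*k + -(2*b)*y \<le> -b*x" for b x y u k :: real
proof -
  assume h: "0 < b" "x \<le> 2*y + 2*u" "u \<le> k"
  then have "x \<le> 2*y + 2*k" by linarith
  then have "b*x \<le> b*(2*y+2*k)" using h by (intro mult_left_mono) auto
  then show ?thesis by (simp add: algebra_simps)
qed

locale main = fkl F m S E G for F :: "real^'d \<Rightarrow> real^'d" and m S E G +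
  fixes p C Z a b :: real
  assumes F_lb: "locally_bounded_on UNIV F"
    and E_meas: "E \<in> sets lborel" and E_pos: "emeasure lborel E > 0"
    and G_pos: "\<forall>x\<in>E. G x > 0"
    and invG_lb: "locally_bounded_on E (\<lambda>x. 1 / G x)"
    and C_pos: "C > 0" and G_growth: "\<forall>x\<in>E. G x \<le> C * exp (norm x)"
    and p_gt: "p > 1" and drift: "filterlim (\<lambda>x. norm x - p * norm (F x)) at_top at_infinity"
    and Z_pos: "Z > 0" and a_pos: "a > 0" and b_pos: "b > 0"
    and gd_lo: "\<forall>v. exp (- b * norm (v - m) ^ 2) / Z \<le> gaussian_density m S v"
    and gd_up: "\<forall>v. gaussian_density m S v \<le> exp (- a * norm (v - m) ^ 2) / Z"
begin

lemma F_bdd: "\<exists>M\<ge>0. \<forall>x. norm x \<le> r \<longrightarrow> norm (F x) \<le> M"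
proof -
  obtain B where B: "\<forall>x\<in>cball 0 r \<inter> UNIV. norm (F x) \<le> B" using locally_bounded_cball[OF F_lb] by blast
  have "norm (F x) \<le> max B 0" if "norm x \<le> r" for x
  proof -
    have "x \<in> cball 0 r \<inter> UNIV" using that by simp
    then show ?thesis using B by force
  qed
  then show ?thesis by (intro exI[of _ "max B 0"]) auto
qed

lemma G_low: "\<exists>g>0. \<forall>x\<in>E. norm x \<le> r \<longrightarrow> g \<le> G x"
proof -
  obtain B where B: "\<forall>x\<in>cball 0 r \<inter> E. norm (1 / G x) \<le> B" using locally_bounded_cball[OF invG_lb] by blast
  define B' where "B' = max B 1"
  have "1 / B' \<le> G x" if x: "x \<in> E" "norm x \<le> r" for x
  proof -
    have g: "G x > 0" using G_pos x by blast
    have "x \<in> cball 0 r \<inter> E" using x by simp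
    then have "norm (1 / G x) \<le> B" using B by blast
    then have "1 / G x \<le> B'" using g unfolding B'_def by simp
    then show ?thesis using g unfolding B'_def by (simp add: field_simps)
  qed
  moreover have "1 / B' > 0" unfolding B'_def by simp
  ultimately show ?thesis by blast
qed

lemma Phi_large: "\<exists>r. \<forall>x. r \<le> norm x \<longrightarrow> T \<le> norm x - p * norm (F x)"
  using drift unfolding filterlim_at_top eventually_at_infinity by blast

lemma Phi_lb: "\<exists>B0. \<forall>x. B0 \<le> norm x - p * norm (F x)"
proof -
  obtain r where r: "\<forall>x. r \<le> norm x \<longrightarrow> 0 \<le> norm x - p * norm (F x)" using Phi_large by blast
  obtain M where M: "M \<ge> 0" "\<forall>x. norm x \<le> r \<longrightarrow> norm (F x) \<le> M" using F_bdd by blast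
  have "- p * M \<le> norm x - p * norm (F x)" for x
  proof (cases "r \<le> norm x")
    case True
    have "p * M \<ge> 0" using M p_gt by simp
    then show ?thesis using r True by force
  next
    case False then have "norm (F x) \<le> M" using M by simp
    then have "p * norm (F x) \<le> p * M" using p_gt by simp
    then show ?thesis using norm_ge_zero[of x] by linarith
  qed
  then show ?thesis by blast
qed

lemma gd_nonneg: "gaussian_density m S v \<ge> 0"
proof -
  have "0 < exp (- b * norm (v - m) ^ 2) / Z" using Z_pos by simp
  then show ?thesis using gd_lo[rule_format, of v] by linarith
qed

lemma gd_le: "gaussian_density m S v \<le> 1 / Z"
proof -
  have "exp (- a * norm (v - m) ^ 2) \<le> 1" using a_pos by simp
  then have "exp (- a * norm (v - m) ^ 2) / Z \<le> 1 / Z" using Z_pos by (intro divide_right_mono) auto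
  then show ?thesis using gd_up[rule_format, of v] by linarith
qed

lemma kern_up_K:
  assumes "norm (F y) \<le> M"
  shows "gaussian_density m S (z - F y) \<le> exp (a * (M + norm m)^2) / Z * exp (- (a/2) * norm z ^ 2)"
proof -
  define w where "w = F y + m"
  have w: "norm w \<le> M + norm m" unfolding w_def using assms norm_triangle_ineq[of "F y" m] by linarith
  have zw: "z - F y - m = z - w" unfolding w_def by (simp add: algebra_simps)
  have "norm z ^ 2 \<le> 2 * norm (z - w) ^ 2 + 2 * norm w ^ 2" using norm_add_sq[of "z - w" w] by simp
  moreover have "norm w ^ 2 \<le> (M + norm m) ^ 2" using w by (intro power_mono) auto
  ultimately have "- a * norm (z - w) ^ 2 \<le> a * (M + norm m)^2 + (- (a/2) * norm z ^ 2)"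
    using a_pos by (intro lin_helper1)
  then have "exp (- a * norm (z - w) ^ 2) \<le> exp (a * (M + norm m)^2) * exp (- (a/2) * norm z ^ 2)"
    by (simp add: exp_add[symmetric])
  then have "exp (- a * norm (z - w) ^ 2) / Z \<le> exp (a * (M + norm m)^2) / Z * exp (- (a/2) * norm z ^ 2)"
    using Z_pos by (simp add: divide_right_mono)
  then show ?thesis using gd_up[rule_format, of "z - F y"] zw by simp
qed

lemma kern_lo_K:
  assumes "norm (F y) \<le> M"
  shows "exp (- 2 * b * (M + norm m)^2) / Z * exp (- (2 * b) * norm z ^ 2) \<le> gaussian_density m S (z - F y)"
proof -
  define w where "w = F y + m"
  have w: "norm w \<le> M + norm m" unfolding w_def using assms norm_triangle_ineq[of "F y" m] by linarith
  have zw: "z - F y - m = z - w" unfolding w_def by (simp add: algebra_simps)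
  have "norm (z - w) ^ 2 \<le> 2 * norm z ^ 2 + 2 * norm w ^ 2" using norm_add_sq[of z "- w"] by simp
  moreover have "norm w ^ 2 \<le> (M + norm m) ^ 2" using w by (intro power_mono) auto
  ultimately have "- 2 * b * (M + norm m)^2 + (- (2 * b) * norm z ^ 2) \<le> - b * norm (z - w) ^ 2"
    using b_pos by (intro lin_helper2)
  then have "exp (- 2 * b * (M + norm m)^2) * exp (- (2 * b) * norm z ^ 2) \<le> exp (- b * norm (z - w) ^ 2)"
    by (simp add: exp_add[symmetric])
  then have "exp (- 2 * b * (M + norm m)^2) / Z * exp (- (2 * b) * norm z ^ 2) \<le> exp (- b * norm (z - w) ^ 2) / Z"
    using Z_pos by (simp add: divide_right_mono)
  then show ?thesis using gd_lo[rule_format, of "z - F y"] zw by simp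
qed

lemma kern_lb:
  assumes y: "y \<in> E" "norm y \<le> r" and Fx: "norm (F x) \<le> M" and g: "0 \<le> g" "g \<le> G y"
  shows "ennreal (exp (- b * (r + M + norm m)^2) / Z * g) \<le> kern x y"
proof -
  have "norm (y - F x - m) \<le> r + M + norm m"
    using y Fx norm_triangle_ineq4[of "y - F x" m] norm_triangle_ineq4[of y "F x"] by linarith
  then have "norm (y - F x - m) ^ 2 \<le> (r + M + norm m) ^ 2" by (intro power_mono) auto
  then have "exp (- b * (r + M + norm m)^2) \<le> exp (- b * norm (y - F x - m) ^ 2)" using b_pos by simp
  then have "exp (- b * (r + M + norm m)^2) / Z \<le> exp (- b * norm (y - F x - m) ^ 2) / Z"
    using Z_pos by (intro divide_right_mono) auto
  then have "exp (- b * (r + M + norm m)^2) / Z \<le> gaussian_density m S (y - F x)"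
    using gd_lo[rule_format, of "y - F x"] by linarith
  then have "exp (- b * (r + M + norm m)^2) / Z * g \<le> gaussian_density m S (y - F x) * G y"
    using g gd_nonneg by (intro mult_mono) auto
  then show ?thesis unfolding kern_def using y g gd_nonneg
    by (simp add: ennreal_mult[symmetric] ennreal_leI)
qed

lemma P1_eq: "P 1 f x = (\<integral>\<^sup>+ y. kern x y * f y \<partial>lborel)"
  using P_Suc[of 0 f x] by simp

lemma kern_zero': "y \<notin> E \<Longrightarrow> kern x y = 0" unfolding kern_def by simp

lemma lyap:
  defines "\<beta> \<equiv> 1 / (p - 1)"
  shows "\<exists>Cl>0. \<forall>x. P 1 (\<lambda>y. ennreal (exp (\<beta> * norm y))) x \<le> ennreal (Cl * exp (- \<beta> * (norm x - p * norm (F x))) * exp (\<beta> * norm x))"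
proof -
  have beta: "\<beta> > 0" unfolding \<beta>_def using p_gt by simp
  define \<gamma> where "\<gamma> = 1 + \<beta>"
  have bp: "\<beta> * p = \<gamma>" unfolding \<gamma>_def \<beta>_def using p_gt by (simp add: field_simps)
  define f where "f v = ennreal (exp (- a * norm v ^ 2 + \<gamma> * norm v))" for v :: "real^'d"
  have fm[measurable]: "f \<in> borel_measurable borel" unfolding f_def[abs_def] by measurable
  have Jf: "(\<integral>\<^sup>+ v. f v \<partial>lborel) < \<top>" unfolding f_def by (rule gauss_rad_int[OF a_pos])
  define J' where "J' = enn2real (\<integral>\<^sup>+ v. f v \<partial>lborel)"
  have J: "(\<integral>\<^sup>+ v. f v \<partial>lborel) = ennreal J'" "J' \<ge> 0" unfolding J'_def using Jf by (auto simp: less_top)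
  define Cl where "Cl = C / Z * (J' + 1) * exp (\<gamma> * norm m)"
  have Cl: "Cl > 0" unfolding Cl_def using C_pos Z_pos J by simp
  have "P 1 (\<lambda>y. ennreal (exp (\<beta> * norm y))) x \<le> ennreal (Cl * exp (- \<beta> * (norm x - p * norm (F x))) * exp (\<beta> * norm x))" for x
  proof -
    define w where "w = F x + m"
    define K1 where "K1 = C / Z * exp (\<gamma> * norm w)"
    have K1: "K1 \<ge> 0" unfolding K1_def using C_pos Z_pos by simp
    have pt: "kern x y * ennreal (exp (\<beta> * norm y)) \<le> ennreal K1 * f (y - w)" for y
    proof (cases "y \<in> E")
      case False then show ?thesis by (simp add: kern_zero')
    next
      case True
      have Gy: "0 < G y" "G y \<le> C * exp (norm y)" using G_pos G_growth True by auto
      have yw: "y - F x - m = y - w" unfolding w_def by (simp add: algebra_simps)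
      have "gaussian_density m S (y - F x) * G y * exp (\<beta> * norm y)
          \<le> exp (- a * norm (y - w) ^ 2) / Z * (C * exp (norm y)) * exp (\<beta> * norm y)"
        using gd_up[rule_format, of "y - F x"] yw Gy gd_nonneg Z_pos C_pos by (intro mult_mono) auto
      also have "\<dots> = C / Z * exp (- a * norm (y - w) ^ 2 + \<gamma> * norm y)"
        unfolding \<gamma>_def by (simp add: exp_add[symmetric] algebra_simps)
      also have "\<dots> \<le> C / Z * exp (- a * norm (y - w) ^ 2 + \<gamma> * (norm (y - w) + norm w))"
      proof -
        have "norm y \<le> norm (y - w) + norm w" using norm_triangle_ineq[of "y - w" w] by simp
        then have "\<gamma> * norm y \<le> \<gamma> * (norm (y - w) + norm w)" unfolding \<gamma>_def using beta by (intro mult_left_mono) auto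
        then show ?thesis using C_pos Z_pos by (intro mult_left_mono) auto
      qed
      also have "\<dots> = K1 * exp (- a * norm (y - w) ^ 2 + \<gamma> * norm (y - w))"
        unfolding K1_def by (simp add: exp_add[symmetric] algebra_simps)
      finally have r: "gaussian_density m S (y - F x) * G y * exp (\<beta> * norm y) \<le> K1 * exp (- a * norm (y - w) ^ 2 + \<gamma> * norm (y - w))" .
      have "kern x y * ennreal (exp (\<beta> * norm y)) = ennreal (gaussian_density m S (y - F x) * G y * exp (\<beta> * norm y))"
        unfolding kern_def using True Gy gd_nonneg by (simp add: ennreal_mult[symmetric])
      also have "\<dots> \<le> ennreal (K1 * exp (- a * norm (y - w) ^ 2 + \<gamma> * norm (y - w)))" using r by (rule ennreal_leI)
      also have "\<dots> = ennreal K1 * f (y - w)" unfolding f_def using K1 by (simp add: ennreal_mult)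
      finally show ?thesis .
    qed
    have "P 1 (\<lambda>y. ennreal (exp (\<beta> * norm y))) x = (\<integral>\<^sup>+ y. kern x y * ennreal (exp (\<beta> * norm y)) \<partial>lborel)"
      by (rule P1_eq)
    also have "\<dots> \<le> (\<integral>\<^sup>+ y. ennreal K1 * f (y - w) \<partial>lborel)" by (intro nn_integral_mono pt)
    also have "\<dots> = ennreal K1 * (\<integral>\<^sup>+ y. f (y - w) \<partial>lborel)" by (rule nn_integral_cmult) measurable
    also have "(\<integral>\<^sup>+ y. f (y - w) \<partial>lborel) = ennreal J'" using nn_integral_translate[OF fm, of w] J by simp
    also have "ennreal K1 * ennreal J' = ennreal (K1 * J')" using K1 J by (simp add: ennreal_mult)
    also have "\<dots> \<le> ennreal (Cl * exp (- \<beta> * (norm x - p * norm (F x))) * exp (\<beta> * norm x))"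
    proof (rule ennreal_leI)
      have nw: "norm w \<le> norm (F x) + norm m" unfolding w_def by (rule norm_triangle_ineq)
      have "K1 * J' \<le> C / Z * exp (\<gamma> * (norm (F x) + norm m)) * (J' + 1)"
        unfolding K1_def using C_pos Z_pos J nw beta unfolding \<gamma>_def
        by (intro mult_mono) auto
      also have "\<dots> = Cl * exp (\<gamma> * norm (F x))"
        unfolding Cl_def by (simp add: exp_add[symmetric] algebra_simps)
      also have "\<gamma> * norm (F x) = - \<beta> * (norm x - p * norm (F x)) + \<beta> * norm x"
        using bp by (simp add: algebra_simps)
      also have "Cl * exp (- \<beta> * (norm x - p * norm (F x)) + \<beta> * norm x) = Cl * exp (- \<beta> * (norm x - p * norm (F x))) * exp (\<beta> * norm x)"
        by (simp only: exp_add mult.assoc)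
      finally show "K1 * J' \<le> Cl * exp (- \<beta> * (norm x - p * norm (F x))) * exp (\<beta> * norm x)" .
    qed
    finally show ?thesis .
  qed
  then show ?thesis using Cl by blast
qed

end



context main begin

theorem condG: "condition_G (restrict_space lborel E) P"
proof -
  define \<beta> where "\<beta> = 1 / (p - 1)"
  have beta: "\<beta> > 0" unfolding \<beta>_def using p_gt by simp
  define \<psi>1 where "\<psi>1 y = exp (\<beta> * norm y)" for y :: "real^'d"
  have psi1_pos: "\<psi>1 y > 0" for y unfolding \<psi>1_def by simp
  have psi1_ge1: "\<psi>1 y \<ge> 1" for y unfolding \<psi>1_def using beta by simp
  have psi1_meas[measurable]: "\<psi>1 \<in> borel_measurable borel" unfolding \<psi>1_def[abs_def] by measurable
  have E_borel[measurable]: "E \<in> sets borel" using E_meas by simp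
  define \<Phi> where "\<Phi> x = norm x - p * norm (F x)" for x
  obtain Cl where Cl: "Cl > 0" "\<forall>x. P 1 (\<lambda>y. ennreal (\<psi>1 y)) x \<le> ennreal (Cl * exp (- \<beta> * \<Phi> x) * \<psi>1 x)"
    using lyap unfolding \<beta>_def[symmetric] \<psi>1_def[symmetric] \<Phi>_def[symmetric] by blast
  obtain B0 where B0: "\<forall>x. B0 \<le> \<Phi> x" using Phi_lb unfolding \<Phi>_def by blast
  obtain R0 where R0: "R0 > 0" "emeasure lborel (E \<inter> cball 0 R0) > 0"
    using pos_measure_ball[OF E_meas E_pos] by blast
  define K0 where "K0 = E \<inter> cball 0 R0"
  have K0_meas[measurable]: "K0 \<in> sets borel" unfolding K0_def by simp
  have K0_fin: "emeasure lborel K0 < \<top>"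
  proof -
    have "emeasure lborel K0 \<le> emeasure lborel (cball (0::real^'d) R0)"
      unfolding K0_def by (intro emeasure_mono) auto
    also have "\<dots> < \<top>" using emeasure_lborel_cball_finite by (simp add: less_top)
    finally show ?thesis .
  qed
  define lK0 where "lK0 = enn2real (emeasure lborel K0)"
  have lK0: "emeasure lborel K0 = ennreal lK0" "lK0 > 0"
    using K0_fin R0(2) unfolding lK0_def K0_def[symmetric]
    by (auto simp: less_top enn2real_positive_iff)
  obtain M0 where M0: "M0 \<ge> 0" "\<forall>x. norm x \<le> R0 \<longrightarrow> norm (F x) \<le> M0" using F_bdd by blast
  obtain g0 where g0: "g0 > 0" "\<forall>x\<in>E. norm x \<le> R0 \<longrightarrow> g0 \<le> G x" using G_low by blast
  define v0 where "v0 x = P 1 (indicator K0) x" for x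
  have v0_meas[measurable]: "v0 \<in> borel_measurable borel" unfolding v0_def[abs_def] by measurable
  have v0_lbM: "ennreal (exp (- b * (R0 + M + norm m)^2) / Z * g0 * lK0) \<le> v0 x"
    if "norm (F x) \<le> M" for x M
  proof -
    have "ennreal (exp (- b * (R0 + M + norm m)^2) / Z * g0 * lK0) = ennreal (exp (- b * (R0 + M + norm m)^2) / Z * g0) * emeasure lborel K0"
    proof -
      have "0 \<le> exp (- b * (R0 + M + norm m)^2) / Z * g0" using g0 Z_pos by simp
      then show ?thesis unfolding lK0(1) using lK0(2) by (intro ennreal_mult) auto
    qed
    also have "\<dots> = (\<integral>\<^sup>+ y. ennreal (exp (- b * (R0 + M + norm m)^2) / Z * g0) * indicator K0 y \<partial>lborel)"
      by (simp add: nn_integral_cmult_indicator)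
    also have "\<dots> \<le> (\<integral>\<^sup>+ y. kern x y * indicator K0 y \<partial>lborel)"
    proof (intro nn_integral_mono)
      fix y show "ennreal (exp (- b * (R0 + M + norm m)^2) / Z * g0) * indicator K0 y \<le> kern x y * indicator K0 y"
        using kern_lb[of y R0 x M g0] that g0 unfolding K0_def by (auto split: split_indicator)
    qed
    also have "\<dots> = v0 x" unfolding v0_def P1_eq ..
    finally show ?thesis .
  qed
  define V where "V = C * exp R0 / Z * lK0"
  have V: "V \<ge> 0" unfolding V_def using C_pos Z_pos lK0 by simp
  have v0_ub: "v0 x \<le> ennreal V" for x
  proof -
    have "v0 x = (\<integral>\<^sup>+ y. kern x y * indicator K0 y \<partial>lborel)" unfolding v0_def P1_eq ..
    also have "\<dots> \<le> (\<integral>\<^sup>+ y. ennreal (C * exp R0 / Z) * indicator K0 y \<partial>lborel)"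
    proof (intro nn_integral_mono)
      fix y
      show "kern x y * indicator K0 y \<le> ennreal (C * exp R0 / Z) * indicator K0 y"
      proof (cases "y \<in> K0")
        case True
        then have y: "y \<in> E" "norm y \<le> R0" unfolding K0_def by auto
        have "G y \<le> C * exp (norm y)" using G_growth y by blast
        also have "\<dots> \<le> C * exp R0" using y C_pos by simp
        finally have Gy: "G y \<le> C * exp R0" .
        have "gaussian_density m S (y - F x) * G y \<le> 1 / Z * (C * exp R0)"
          using gd_le Gy gd_nonneg G_pos y Z_pos by (intro mult_mono) auto
        moreover have "ennreal (gaussian_density m S (y - F x)) * ennreal (G y) = ennreal (gaussian_density m S (y - F x) * G y)"
          using gd_nonneg G_pos y by (intro ennreal_mult[symmetric]) auto
        ultimately have "kern x y \<le> ennreal (C * exp R0 / Z)"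
          unfolding kern_def using y by (simp add: ennreal_leI)
        then show ?thesis using True by simp
      qed simp
    qed
    also have "\<dots> = ennreal (C * exp R0 / Z) * emeasure lborel K0"
      by (rule nn_integral_cmult_indicator) simp
    also have "\<dots> = ennreal (C * exp R0 / Z * lK0)" unfolding lK0(1)
      using C_pos Z_pos lK0(2) by (intro ennreal_mult[symmetric]) auto
    also have "C * exp R0 / Z * lK0 = V" unfolding V_def ..
    finally show ?thesis .
  qed
  define v0r where "v0r x = enn2real (v0 x)" for x
  have v0r: "v0 x = ennreal (v0r x)" "0 \<le> v0r x" "v0r x \<le> V" for x
  proof -
    have "v0 x < \<top>" using v0_ub[of x] by (simp add: le_less_trans less_top)
    then show "v0 x = ennreal (v0r x)" "0 \<le> v0r x" unfolding v0r_def by (auto simp: less_top)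
    then show "v0r x \<le> V" using v0_ub[of x] V by simp
  qed
  have v0r_meas[measurable]: "v0r \<in> borel_measurable borel" unfolding v0r_def[abs_def] by measurable
  define \<theta>0 where "\<theta>0 = exp (- b * (R0 + M0 + norm m)^2) / Z * g0 * lK0"
  have th0: "\<theta>0 > 0" unfolding \<theta>0_def using Z_pos g0 lK0 by simp
  have v0_K0: "\<theta>0 \<le> v0r x" if "x \<in> K0" for x
  proof -
    have "norm (F x) \<le> M0" using M0 that unfolding K0_def by auto
    then have "ennreal \<theta>0 \<le> ennreal (v0r x)" using v0_lbM[of x M0] v0r unfolding \<theta>0_def by simp
    then show ?thesis using v0r(2)[of x] by simp
  qed
  define \<theta>2 where "\<theta>2 = \<theta>0 / 2"
  define \<theta>1 where "\<theta>1 = \<theta>0 / 4"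
  have th: "\<theta>1 > 0" "\<theta>2 > 0" "\<theta>1 < \<theta>2" unfolding \<theta>1_def \<theta>2_def using th0 by auto
  obtain R1 where R1: "\<forall>x. R1 \<le> norm x \<longrightarrow> ln (Cl / \<theta>1) / \<beta> \<le> \<Phi> x"
    using Phi_large unfolding \<Phi>_def by blast
  have far: "Cl * exp (- \<beta> * \<Phi> x) \<le> \<theta>1" if "R1 \<le> norm x" for x
  proof -
    have "ln (Cl / \<theta>1) \<le> \<beta> * \<Phi> x" using R1 that beta by (simp add: field_simps)
    then have "exp (- \<beta> * \<Phi> x) \<le> exp (- ln (Cl / \<theta>1))" by simp
    also have "\<dots> = \<theta>1 / Cl" using Cl th by (simp add: exp_minus exp_ln)
    finally show ?thesis using Cl by (simp add: field_simps)
  qed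
  define R where "R = max R0 R1"
  define K where "K = E \<inter> cball 0 R"
  have K_meas[measurable]: "K \<in> sets borel" unfolding K_def by simp
  have K0K: "K0 \<subseteq> K" unfolding K0_def K_def R_def by auto
  have KE: "K \<subseteq> E" unfolding K_def by auto
  have K_bdd: "\<forall>y\<in>K. norm y \<le> R" unfolding K_def by auto
  obtain MF where MF: "MF \<ge> 0" "\<forall>x. norm x \<le> R \<longrightarrow> norm (F x) \<le> MF" using F_bdd by blast
  obtain gK where gK: "gK > 0" "\<forall>x\<in>E. norm x \<le> R \<longrightarrow> gK \<le> G x" using G_low by blast
  define s where "s = 1 / (1 + V / \<theta>0)"
  have Vth: "0 \<le> V / \<theta>0" using V th0 by simp
  have s: "s > 0" unfolding s_def using Vth by simp
  define \<psi>2 where "\<psi>2 x = s * (indicator K0 x + indicator K x * v0r x / \<theta>0)" for x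
  have psi2_meas[measurable]: "\<psi>2 \<in> borel_measurable borel" unfolding \<psi>2_def[abs_def] by measurable
  have psi2_nonneg: "\<psi>2 x \<ge> 0" for x unfolding \<psi>2_def using s v0r th0 by simp
  have psi2_le1: "\<psi>2 x \<le> 1" for x
  proof -
    have d: "v0r x / \<theta>0 \<le> V / \<theta>0" "0 \<le> v0r x / \<theta>0" using v0r[of x] th0 by (auto intro: divide_right_mono)
    have "indicator K0 x + indicator K x * v0r x / \<theta>0 \<le> 1 + V / \<theta>0"
      using d by (auto simp: indicator_def)
    then have "\<psi>2 x \<le> s * (1 + V / \<theta>0)" unfolding \<psi>2_def using s by (intro mult_left_mono) auto
    also have "\<dots> = 1"
    proof -
      have "1 + V / \<theta>0 \<noteq> 0" using Vth by linarith
      then show ?thesis unfolding s_def by simp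
    qed
    finally show ?thesis .
  qed
  have psi2_out: "\<psi>2 x = 0" if "x \<notin> K" for x
    using that K0K unfolding \<psi>2_def by (auto simp: indicator_def)
  have psi2_le: "\<forall>y. \<psi>2 y \<le> indicator K y * \<psi>1 y"
    using psi2_out psi2_le1 psi1_ge1 by (auto simp: indicator_def intro: order.trans)
  have step: "ennreal (\<theta>2 * \<psi>2 u) \<le> P 1 (\<lambda>y. ennreal (\<psi>2 y)) u" for u
  proof -
    have r: "\<theta>2 * \<psi>2 u \<le> s * v0r u"
    proof (cases "u \<in> K")
      case False then show ?thesis using psi2_out[OF False] s v0r by simp
    next
      case True
      show ?thesis
      proof (cases "u \<in> K0")
        case True
        then have "\<psi>2 u = s * (1 + v0r u / \<theta>0)" unfolding \<psi>2_def using K0K by auto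
        moreover have "\<theta>0 \<le> v0r u" using v0_K0 True by blast
        ultimately show ?thesis unfolding \<theta>2_def using s th0 by (simp add: field_simps)
      next
        case False
        then have "\<psi>2 u = s * (v0r u / \<theta>0)" unfolding \<psi>2_def using \<open>u \<in> K\<close> by auto
        then show ?thesis unfolding \<theta>2_def using s th0 v0r[of u] by (simp add: field_simps)
      qed
    qed
    have "ennreal (\<theta>2 * \<psi>2 u) \<le> ennreal (s * v0r u)" using r by (rule ennreal_leI)
    also have "\<dots> = ennreal s * v0 u" using s v0r by (simp add: ennreal_mult)
    also have "\<dots> = P 1 (\<lambda>y. ennreal s * indicator K0 y) u" unfolding v0_def by (rule P_cmult[symmetric]) measurable
    also have "\<dots> \<le> P 1 (\<lambda>y. ennreal (\<psi>2 y)) u"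
    proof (rule P_mono)
      fix y
      have "s * indicator K0 y \<le> \<psi>2 y" unfolding \<psi>2_def using s th0 v0r[of y]
        by (intro mult_left_mono) (auto simp: indicator_def)
      then have "ennreal (s * indicator K0 y) \<le> ennreal (\<psi>2 y)" by (rule ennreal_leI)
      then show "ennreal s * indicator K0 y \<le> ennreal (\<psi>2 y)" using s by (simp add: ennreal_mult ennreal_indicator)
    qed
    finally show ?thesis .
  qed
  have grow: "\<forall>n y. ennreal (\<theta>2 ^ n) * ennreal (\<psi>2 y) \<le> P n (\<lambda>y. ennreal (\<psi>2 y)) y"
  proof (intro allI)
    fix n show "\<And>y. ennreal (\<theta>2 ^ n) * ennreal (\<psi>2 y) \<le> P n (\<lambda>y. ennreal (\<psi>2 y)) y"
    proof (induction n)
      case 0 then show ?case by simp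
    next
      case (Suc n)
      fix y
      have "ennreal (\<theta>2 ^ Suc n) * ennreal (\<psi>2 y) = ennreal \<theta>2 * (ennreal (\<theta>2 ^ n) * ennreal (\<psi>2 y))"
        using th by (simp add: ennreal_mult mult.assoc)
      also have "\<dots> \<le> ennreal \<theta>2 * P n (\<lambda>y. ennreal (\<psi>2 y)) y" using Suc.IH by (rule mult_left_mono) simp
      also have "\<dots> = P n (\<lambda>y. ennreal \<theta>2 * ennreal (\<psi>2 y)) y" by (rule P_cmult[symmetric]) measurable
      also have "\<dots> \<le> P n (P 1 (\<lambda>y. ennreal (\<psi>2 y))) y"
      proof (rule P_mono)
        fix y
        have "ennreal \<theta>2 * ennreal (\<psi>2 y) = ennreal (\<theta>2 * \<psi>2 y)"
          using th psi2_nonneg[of y] by (intro ennreal_mult[symmetric]) auto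
        then show "ennreal \<theta>2 * ennreal (\<psi>2 y) \<le> P 1 (\<lambda>y. ennreal (\<psi>2 y)) y" using step[of y] by simp
      qed
      also have "\<dots> = P (Suc n) (\<lambda>y. ennreal (\<psi>2 y)) y" using P_comp[of n 1] by simp
      finally show "ennreal (\<theta>2 ^ Suc n) * ennreal (\<psi>2 y) \<le> P (Suc n) (\<lambda>y. ennreal (\<psi>2 y)) y" .
    qed
  qed

  define lowR where "lowR = exp (- b * (R0 + MF + norm m)^2) / Z * g0 * lK0"
  have lowR: "lowR > 0" unfolding lowR_def using Z_pos g0 lK0 by simp
  have v0_K: "lowR \<le> v0r x" if "x \<in> K" for x
  proof -
    have "norm (F x) \<le> MF" using MF that unfolding K_def by auto
    then have "ennreal lowR \<le> ennreal (v0r x)" using v0_lbM[of x MF] v0r unfolding lowR_def by simp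
    then show ?thesis using v0r(2)[of x] by simp
  qed
  define c\<psi> where "c\<psi> = s * lowR / \<theta>0 * exp (- \<beta> * R)"
  have cpsi: "c\<psi> > 0" unfolding c\<psi>_def using s lowR th0 by simp
  have psi2_low: "\<forall>y\<in>K. c\<psi> * \<psi>1 y \<le> \<psi>2 y"
  proof
    fix y assume y: "y \<in> K"
    have "exp (- \<beta> * R) * \<psi>1 y \<le> 1"
    proof -
      have "norm y \<le> R" using K_bdd y by blast
      then have "\<beta> * norm y \<le> \<beta> * R" using beta by (intro mult_left_mono) auto
      then have l: "exp (- \<beta> * R + \<beta> * norm y) \<le> 1" by simp
      have "exp (- \<beta> * R) * \<psi>1 y = exp (- \<beta> * R + \<beta> * norm y)" unfolding \<psi>1_def by (rule mult_exp_exp)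
      then show ?thesis using l by simp
    qed
    then have "c\<psi> * \<psi>1 y \<le> s * lowR / \<theta>0"
      unfolding c\<psi>_def using s lowR th0 mult_left_mono[of "exp (- \<beta> * R) * \<psi>1 y" 1 "s * lowR / \<theta>0"]
      by (simp add: mult.assoc)
    also have "\<dots> \<le> s * v0r y / \<theta>0" using v0_K[OF y] s th0 by (simp add: divide_right_mono)
    also have "\<dots> \<le> \<psi>2 y" unfolding \<psi>2_def using y s by (simp add: field_simps)
    finally show "c\<psi> * \<psi>1 y \<le> \<psi>2 y" .
  qed
  have lyapK: "\<forall>z\<in>E. z \<notin> K \<longrightarrow> P 1 (\<lambda>y. ennreal (\<psi>1 y)) z \<le> ennreal \<theta>1 * ennreal (\<psi>1 z)"
  proof (intro ballI impI)
    fix z assume z: "z \<in> E" "z \<notin> K"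
    then have "R < norm z" unfolding K_def by auto
    then have "R1 \<le> norm z" unfolding R_def by simp
    then have "Cl * exp (- \<beta> * \<Phi> z) * \<psi>1 z \<le> \<theta>1 * \<psi>1 z" using far psi1_pos[of z] by (intro mult_right_mono) auto
    then have "ennreal (Cl * exp (- \<beta> * \<Phi> z) * \<psi>1 z) \<le> ennreal \<theta>1 * ennreal (\<psi>1 z)"
      using th psi1_pos[of z] by (simp add: ennreal_mult[symmetric] ennreal_leI)
    then show "P 1 (\<lambda>y. ennreal (\<psi>1 y)) z \<le> ennreal \<theta>1 * ennreal (\<psi>1 z)" using Cl(2) order.trans by blast
  qed
  define c2 where "c2 = Cl * exp (- \<beta> * B0) + 1"
  have c2: "c2 > 0" unfolding c2_def using Cl by (simp add: add_pos_pos)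
  have lyapG2: "\<forall>x\<in>E. P 1 (\<lambda>y. ennreal (\<psi>1 y)) x \<le> ennreal (\<theta>1 * \<psi>1 x + c2 * indicator K x * \<psi>1 x)"
  proof
    fix x assume x: "x \<in> E"
    show "P 1 (\<lambda>y. ennreal (\<psi>1 y)) x \<le> ennreal (\<theta>1 * \<psi>1 x + c2 * indicator K x * \<psi>1 x)"
    proof (cases "x \<in> K")
      case True
      have "Cl * exp (- \<beta> * \<Phi> x) \<le> Cl * exp (- \<beta> * B0)"
        using B0 beta Cl by (intro mult_left_mono) (auto simp: mult_left_mono)
      also have "\<dots> \<le> \<theta>1 + c2" unfolding c2_def using th by simp
      finally have "Cl * exp (- \<beta> * \<Phi> x) * \<psi>1 x \<le> (\<theta>1 + c2) * \<psi>1 x" using psi1_pos[of x] by (intro mult_right_mono) auto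
      then have "ennreal (Cl * exp (- \<beta> * \<Phi> x) * \<psi>1 x) \<le> ennreal (\<theta>1 * \<psi>1 x + c2 * indicator K x * \<psi>1 x)"
        using True by (intro ennreal_leI) (simp add: algebra_simps)
      then show ?thesis using Cl(2) order.trans by blast
    next
      case False
      then have "P 1 (\<lambda>y. ennreal (\<psi>1 y)) x \<le> ennreal \<theta>1 * ennreal (\<psi>1 x)" using lyapK x by blast
      also have "\<dots> = ennreal (\<theta>1 * \<psi>1 x + c2 * indicator K x * \<psi>1 x)"
        using False th psi1_pos[of x] by (simp add: ennreal_mult[symmetric])
      finally show ?thesis .
    qed
  qed
  define U where "U = exp (a * (MF + norm m)^2) / Z"
  define Lo where "Lo = exp (- 2 * b * (MF + norm m)^2) / Z"
  have kup: "\<forall>y\<in>K. \<forall>z. gaussian_density m S (z - F y) \<le> U * exp (- (a/2) * norm z ^ 2)"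
    using kern_up_K MF K_bdd unfolding U_def by blast
  have klo: "\<forall>y\<in>K. \<forall>z. Lo * exp (- (2*b) * norm z ^ 2) \<le> gaussian_density m S (z - F y)"
    using kern_lo_K MF K_bdd unfolding Lo_def by blast
  have psi1_eq: "\<psi>1 = (\<lambda>y. exp (\<beta> * norm y))" unfolding \<psi>1_def ..
  interpret g3: g3 F m S E G K \<psi>1 \<psi>2 \<theta>1 \<theta>2 c\<psi> \<beta> R U Lo "a/2" "2*b" C
    by (rule g3.intro[OF fkl_axioms g3_axioms.intro[OF KE K_meas K_bdd psi1_eq beta lyapK psi2_meas psi2_le grow
          psi2_low th(1) less_imp_le[OF th(3)] cpsi kup klo]])
      (use Z_pos a_pos b_pos C_pos G_growth in \<open>auto simp: U_def Lo_def\<close>)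
  obtain c3 where c3: "c3 \<ge> 1" "\<forall>n. \<forall>y\<in>K. \<forall>y'\<in>K. g3.R n y \<le> ennreal c3 * g3.R n y'"
    using g3.G3_main by blast

  have G3: "\<forall>n. (SUP y\<in>K. P n (\<lambda>z. ennreal (\<psi>1 z)) y / ennreal (\<psi>1 y))
             / (INF y\<in>K. P n (\<lambda>z. ennreal (\<psi>1 z)) y / ennreal (\<psi>1 y)) \<le> ennreal c3"
  proof
    fix n
    have Req: "P n (\<lambda>z. ennreal (\<psi>1 z)) y / ennreal (\<psi>1 y) = g3.R n y" for y
      unfolding g3.R_def divide_ennreal_def using psi1_pos[of y]
      by (simp add: inverse_ennreal inverse_eq_divide)
    define A where "A = (SUP y\<in>K. g3.R n y)"
    define B where "B = (INF y\<in>K. g3.R n y)"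
    have c3inv: "ennreal (1 / c3) * ennreal c3 = 1" using c3 by (simp add: ennreal_mult[symmetric])
    have AB: "A * ennreal (1 / c3) \<le> B"
      unfolding B_def
    proof (rule INF_greatest)
      fix y' assume y': "y' \<in> K"
      have "A \<le> ennreal c3 * g3.R n y'" unfolding A_def using c3(2) y' by (intro SUP_least) auto
      then have "A * ennreal (1 / c3) \<le> ennreal c3 * g3.R n y' * ennreal (1 / c3)" by (rule mult_right_mono) simp
      also have "\<dots> = (ennreal (1 / c3) * ennreal c3) * g3.R n y'" by (simp only: ac_simps)
      also have "\<dots> = g3.R n y'" unfolding c3inv by simp
      finally show "A * ennreal (1 / c3) \<le> g3.R n y'" .
    qed
    have Bpos: "ennreal (\<theta>2 ^ n * c\<psi>) \<le> B" unfolding B_def using g3.growth_lb by (intro INF_greatest) auto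
    have "A / B \<le> ennreal c3"
    proof (cases "B = \<top>")
      case True then show ?thesis by simp
    next
      case False
      define b' where "b' = enn2real B"
      have b': "B = ennreal b'" "b' > 0"
      proof -
        show "B = ennreal b'" unfolding b'_def using False by (simp add: less_top)
        have "0 < ennreal (\<theta>2 ^ n * c\<psi>)" using th cpsi by simp
        then have "0 < B" using Bpos by (rule less_le_trans)
        then show "b' > 0" unfolding b'_def using False by (simp add: enn2real_positive_iff less_top)
      qed
      have "A = A * ennreal (1 / c3) * ennreal c3" using c3inv by (simp add: mult.assoc)
      also have "\<dots> \<le> B * ennreal c3" using AB by (rule mult_right_mono) simp
      finally have "A / B \<le> B * ennreal c3 / B" by (rule divide_right_mono_ennreal)
      also have "B * ennreal c3 / B = ennreal c3"
        unfolding mult.commute[of B] using b' by (intro ennreal_mult_divide_eq) auto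
      finally show ?thesis .
    qed
    then show "(SUP y\<in>K. P n (\<lambda>z. ennreal (\<psi>1 z)) y / ennreal (\<psi>1 y))
             / (INF y\<in>K. P n (\<lambda>z. ennreal (\<psi>1 z)) y / ennreal (\<psi>1 y)) \<le> ennreal c3"
      unfolding Req A_def B_def .
  qed
  have G4: "\<forall>x\<in>K. \<exists>n4. \<forall>n\<ge>n4. P n (\<lambda>y. indicator K y * ennreal (\<psi>1 y)) x > 0"
  proof (intro ballI exI allI impI)
    fix x n assume x: "x \<in> K"
    have "0 < c\<psi> * \<psi>1 x" using cpsi psi1_pos[of x] by simp
    then have p2: "0 < \<psi>2 x" using psi2_low x by (meson order.strict_trans2)
    have "0 < ennreal (\<theta>2 ^ n)" "0 < ennreal (\<psi>2 x)" using th p2 by auto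
    then have "0 < ennreal (\<theta>2 ^ n) * ennreal (\<psi>2 x)" by (simp add: ennreal_zero_less_mult_iff)
    also have "\<dots> \<le> P n (\<lambda>y. ennreal (\<psi>2 y)) x" using grow by blast
    also have "\<dots> \<le> P n (\<lambda>y. indicator K y * ennreal (\<psi>1 y)) x" by (rule g3.P_psi2_le)
    finally show "P n (\<lambda>y. indicator K y * ennreal (\<psi>1 y)) x > 0" .
  qed
  have Eint: "E \<inter> space lborel \<in> sets lborel" using E_meas by simp
  have spaceM: "space (restrict_space lborel E) = E" by (simp add: space_restrict_space)
  have setsM: "A \<in> sets (restrict_space lborel E) \<longleftrightarrow> A \<subseteq> E \<and> A \<in> sets lborel" for A
    using sets_restrict_space_iff[OF Eint] .
  have K_fin: "emeasure lborel K < \<top>"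
  proof -
    have "emeasure lborel K \<le> emeasure lborel (cball (0::real^'d) R)"
      unfolding K_def by (intro emeasure_mono) auto
    also have "\<dots> < \<top>" using emeasure_lborel_cball_finite by (simp add: less_top)
    finally show ?thesis .
  qed
  define lK where "lK = enn2real (emeasure lborel K)"
  have lK: "emeasure lborel K = ennreal lK" "lK > 0"
  proof -
    show "emeasure lborel K = ennreal lK" unfolding lK_def using K_fin by (simp add: less_top)
    have "emeasure lborel K0 \<le> emeasure lborel K" using K0K by (intro emeasure_mono) auto
    then have "0 < emeasure lborel K" using R0(2) unfolding K0_def[symmetric] by (rule less_le_trans[rotated])
    then show "lK > 0" unfolding lK_def using K_fin by (simp add: enn2real_positive_iff less_top)
  qed
  have K_ne: "K \<noteq> {}" using lK by auto
  define N where "N = restrict_space lborel K"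
  have Kint: "K \<inter> space lborel \<in> sets lborel" by simp
  have N_K: "emeasure N K = emeasure lborel K" unfolding N_def by (rule emeasure_restrict_space[OF Kint]) simp
  define \<nu> where "\<nu> = uniform_measure N K"
  have K_N: "K \<in> sets N" unfolding N_def using sets_restrict_space_iff[OF Kint] by simp
  have prob: "prob_space \<nu>" unfolding \<nu>_def
    by (rule prob_space_uniform_measure) (use N_K lK in auto)
  have sets\<nu>: "sets \<nu> = sets (restrict_space (restrict_space lborel E) K)"
  proof -
    have "restrict_space (restrict_space lborel E) K = restrict_space lborel (E \<inter> K)"
      using Eint Kint by (rule restrict_restrict_space)
    also have "E \<inter> K = K" using KE by auto
    finally show ?thesis unfolding \<nu>_def N_def by simp
  qed
  define \<kappa> where "\<kappa> = exp (- b * (R + MF + norm m)^2) / Z * gK"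
  have kappa: "\<kappa> > 0" unfolding \<kappa>_def using Z_pos gK by simp
  define c1 where "c1 = \<kappa> * lK * exp (- \<beta> * R)"
  have c1: "c1 > 0" unfolding c1_def using kappa lK by simp
  have G1: "\<forall>x\<in>K. \<forall>A\<in>sets (restrict_space lborel E). A \<subseteq> K \<longrightarrow>
      P 1 (\<lambda>y. ennreal (\<psi>1 y) * indicator A y) x \<ge> ennreal c1 * emeasure \<nu> A * ennreal (\<psi>1 x)"
  proof (intro ballI impI)
    fix x A assume x: "x \<in> K" and A: "A \<in> sets (restrict_space lborel E)" and AK: "A \<subseteq> K"
    have Al: "A \<in> sets lborel" using A setsM by blast
    have A_N: "A \<in> sets N" unfolding N_def using sets_restrict_space_iff[OF Kint] Al AK by simp
    have "emeasure lborel A \<le> emeasure lborel K" using AK by (intro emeasure_mono) auto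
    then have Afin: "emeasure lborel A < \<top>" using K_fin by (rule le_less_trans)
    define lA where "lA = enn2real (emeasure lborel A)"
    have lA: "emeasure lborel A = ennreal lA" "lA \<ge> 0" unfolding lA_def using Afin by (auto simp: less_top)
    have nuA: "emeasure \<nu> A = ennreal (lA / lK)"
    proof -
      have "emeasure \<nu> A = emeasure N (K \<inter> A) / emeasure N K" unfolding \<nu>_def using K_N A_N by simp
      also have "K \<inter> A = A" using AK by auto
      also have "emeasure N A = emeasure lborel A" unfolding N_def by (rule emeasure_restrict_space[OF Kint AK])
      finally show ?thesis using N_K lA lK by (simp add: divide_ennreal)
    qed
    have Fx: "norm (F x) \<le> MF" using MF K_bdd x by blast
    have "ennreal (\<kappa> * lA) = ennreal \<kappa> * emeasure lborel A" using lA kappa by (simp add: ennreal_mult)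
    also have "\<dots> = (\<integral>\<^sup>+ y. ennreal \<kappa> * indicator A y \<partial>lborel)"
      using Al by (simp add: nn_integral_cmult_indicator)
    also have "\<dots> \<le> (\<integral>\<^sup>+ y. kern x y * (ennreal (\<psi>1 y) * indicator A y) \<partial>lborel)"
    proof (intro nn_integral_mono)
      fix y show "ennreal \<kappa> * indicator A y \<le> kern x y * (ennreal (\<psi>1 y) * indicator A y)"
      proof (cases "y \<in> A")
        case True
        then have y: "y \<in> E" "norm y \<le> R" "gK \<le> G y" using AK KE K_bdd gK by auto
        have "ennreal \<kappa> \<le> kern x y" unfolding \<kappa>_def using kern_lb[OF y(1,2) Fx _ y(3)] gK by simp
        also have "\<dots> \<le> kern x y * ennreal (\<psi>1 y)"
          using psi1_ge1[of y] mult_left_mono[of 1 "ennreal (\<psi>1 y)" "kern x y"] by simp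
        finally show ?thesis using True by simp
      qed simp
    qed
    also have "\<dots> = P 1 (\<lambda>y. ennreal (\<psi>1 y) * indicator A y) x" unfolding P1_eq ..
    finally have low: "ennreal (\<kappa> * lA) \<le> P 1 (\<lambda>y. ennreal (\<psi>1 y) * indicator A y) x" .
    have "c1 * (lA / lK) * \<psi>1 x \<le> \<kappa> * lA"
    proof -
      have "norm x \<le> R" using K_bdd x by blast
      then have "\<beta> * norm x \<le> \<beta> * R" using beta by (intro mult_left_mono) auto
      then have l: "exp (- \<beta> * R + \<beta> * norm x) \<le> 1" by simp
      have "exp (- \<beta> * R) * \<psi>1 x = exp (- \<beta> * R + \<beta> * norm x)" unfolding \<psi>1_def by (rule mult_exp_exp)
      then have "exp (- \<beta> * R) * \<psi>1 x \<le> 1" using l by simp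
      then have "\<kappa> * lA * (exp (- \<beta> * R) * \<psi>1 x) \<le> \<kappa> * lA * 1"
        using kappa lA by (intro mult_left_mono) auto
      moreover have "c1 * (lA / lK) * \<psi>1 x = \<kappa> * lA * (exp (- \<beta> * R) * \<psi>1 x)"
        unfolding c1_def using lK by (simp add: field_simps)
      ultimately show ?thesis by simp
    qed
    then have "ennreal c1 * emeasure \<nu> A * ennreal (\<psi>1 x) \<le> ennreal (\<kappa> * lA)"
      unfolding nuA using c1 lA lK psi1_pos[of x] by (simp add: ennreal_mult[symmetric] ennreal_leI)
    then show "ennreal c1 * emeasure \<nu> A * ennreal (\<psi>1 x) \<le> P 1 (\<lambda>y. ennreal (\<psi>1 y) * indicator A y) x"
      using low by (rule order.trans)
  qed
  have psi1M: "\<psi>1 \<in> borel_measurable (restrict_space lborel E)"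
    by (rule measurable_restrict_space1) simp
  have psi2M: "\<psi>2 \<in> borel_measurable (restrict_space lborel E)"
    by (rule measurable_restrict_space1) simp
  have KM: "K \<in> sets (restrict_space lborel E)" using setsM KE by simp
  have INFpos: "(INF x\<in>K. \<psi>2 x / \<psi>1 x) > 0"
  proof -
    have "c\<psi> \<le> (INF x\<in>K. \<psi>2 x / \<psi>1 x)"
    proof (rule cINF_greatest[OF K_ne])
      fix x assume "x \<in> K"
      then show "c\<psi> \<le> \<psi>2 x / \<psi>1 x" using psi2_low psi1_pos[of x] by (simp add: field_simps)
    qed
    then show ?thesis using cpsi by linarith
  qed
  have ratio: "\<forall>x\<in>space (restrict_space lborel E). \<psi>2 x / \<psi>1 x \<le> 1"
    using psi2_le1 psi1_ge1 psi1_pos by (auto simp: divide_le_eq_1 intro: order.trans)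
  have P2: "\<forall>x\<in>space (restrict_space lborel E). P 1 (\<lambda>y. ennreal (\<psi>2 y)) x \<ge> ennreal (\<theta>2 * \<psi>2 x)"
    using step by blast
  show ?thesis
    unfolding condition_G_def
    apply (rule exI[of _ \<theta>1], rule exI[of _ \<theta>2], rule exI[of _ c1], rule exI[of _ c2], rule exI[of _ c3])
    apply (rule exI[of _ 1], rule exI[of _ \<psi>1], rule exI[of _ \<psi>2], rule exI[of _ K], rule exI[of _ \<nu>])
    using th c1 c2 c3(1) psi1M psi2M psi1_pos psi2_nonneg KM prob sets\<nu> G1 INFpos ratio lyapG2 P2 G3 G4
    unfolding spaceM
    by auto
qed

end



theorem proposition3p1:
  fixes F :: "real^'d \<Rightarrow> real^'d" and m :: "real^'d" and S :: "real^'d^'d"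
    and E :: "(real^'d) set" and G :: "real^'d \<Rightarrow> real"
  assumes F_meas: "F \<in> borel_measurable borel"
    and F_lb: "locally_bounded_on UNIV F"
    and gauss: "nondegenerate_covariance S"
    and E_meas: "E \<in> sets lborel" and E_pos: "emeasure lborel E > 0"
    and G_meas: "G \<in> borel_measurable (restrict_space borel E)"
    and G_pos: "\<forall>x\<in>E. G x > 0"
    and invG_lb: "locally_bounded_on E (\<lambda>x. 1 / G x)"
    and G_growth: "\<exists>C>0. \<forall>x\<in>E. G x \<le> C * exp (norm x)"
    and F_drift: "\<exists>p>1. filterlim (\<lambda>x. norm x - p * norm (F x)) at_top at_infinity"
  shows "condition_G (restrict_space lborel E) (fk_semigroup F m S E G)"
proof -
  have Eb: "E \<in> sets borel" using E_meas by simp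
  have "(\<lambda>x. G x * indicator E x) \<in> borel_measurable borel"
    using G_meas borel_measurable_restrict_space_iff[of E borel G] Eb by (simp add: mult.commute)
  then have "(\<lambda>x. ennreal (G x * indicator E x)) \<in> borel_measurable borel" by measurable
  moreover have "(\<lambda>x. ennreal (G x * indicator E x)) = (\<lambda>y. ennreal (G y) * indicator E y)"
    by (auto simp: fun_eq_iff indicator_def)
  ultimately have Gm: "(\<lambda>y. ennreal (G y) * indicator E y) \<in> borel_measurable borel" by simp
  obtain Z a b where Zab: "Z > 0" "a > 0" "b > 0"
    "\<forall>v. exp (- b * norm (v - m) ^ 2) / Z \<le> gaussian_density m S v \<and> gaussian_density m S v \<le> exp (- a * norm (v - m) ^ 2) / Z"
    using gd_bounds[OF gauss, of m] by blast
  obtain C where C: "C > 0" "\<forall>x\<in>E. G x \<le> C * exp (norm x)" using G_growth by blast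
  obtain p where p: "p > 1" "filterlim (\<lambda>x. norm x - p * norm (F x)) at_top at_infinity" using F_drift by blast
  interpret main F m S E G p C Z a b
    by (rule main.intro[OF fkl.intro[OF F_meas Gm] main_axioms.intro[OF F_lb E_meas E_pos G_pos invG_lb C p Zab(1,2,3)]])
      (use Zab(4) in auto)
  show ?thesis by (rule condG)
qed


end
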